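(* Let $\mu$ be a probability measure on $[0,1]$ and let $K$ be the probability measure on $\mathbf{N}\cup\{\infty\}$ defined by $$K(n)=\int_0^1(1-x)^{n-1}x\,\mathrm{d}\mu(x)\quad(n\ge 1),\qquad K(\{\infty\})=\mu(\{0\}).$$ Let $\tau$ be the renewal process with inter-arrival law $K$ and law $\mathbf{P}$. Then there exists a probability measure $\nu$ on $[0,1]$ such that $$s_\nu(z)\,s_\mu(1-z)=\frac{1}{z(1-z)}\qquad\text{for all } z\in\mathbf{C}_+,$$ and for all integers $N\ge 0$, $$\mathbf{P}(N\in\tau)=\int_0^1 x^N\,\mathrm{d}\nu(x).$$
   Context: Renewal process: given a probability measure $K$ on $\mathbf{N}\cup\{\infty\}=\{1,2,\dots\}\cup\{\infty\}$, let $(\eta_n)_{n\ge1}$ be i.i.d. with law $K$, $\tau_0=0$, $\tau_n=\eta_1+\dots+\eta_n$, and $\tau=\{\tau_i : i\ge 0\}$ (a random subset of $\mathbf{N}\cup\{0\}$); $\mathbf{P}$ denotes its law. $\mathbf{C}_+=\{z\in\mathbf{C}:\Im z>0\}$. For a positive measure $\mu$ on $\mathbf{R}$, its Stieltjes transform is $s_\mu(z)=\int_{\mathbf{R}}\frac{\mathrm{d}\mu(x)}{x-z}$, defined for $z\in\mathbf{C}_+$ (and analytically for $z$ off the support of $\mu$). *)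

theory Defs
  imports "HOL-Probability.Probability"
begin

definition stieltjes :: "real measure \<Rightarrow> complex \<Rightarrow> complex" where
  "stieltjes M z = integral\<^sup>L M (\<lambda>x. 1 / (complex_of_real x - z))"

text \<open>Renewal process: i.i.d. inter-arrival times with law K on N \<union> {\<infinity>}
  (modelled as enat), tau = {eta_1 + ... + eta_n : n \<ge> 0}.\<close>
definition renewal_seq_law :: "enat pmf \<Rightarrow> (nat \<Rightarrow> enat) measure" where
  "renewal_seq_law K = PiM UNIV (\<lambda>_. measure_pmf K)"

definition renewal_set :: "(nat \<Rightarrow> enat) \<Rightarrow> nat set" where
  "renewal_set \<eta> = {N. \<exists>n. (\<Sum>i<n. \<eta> i) = enat N}"

definition renewal_prob :: "enat pmf \<Rightarrow> nat \<Rightarrow> real" where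
  "renewal_prob K N = measure (renewal_seq_law K) {\<eta> \<in> space (renewal_seq_law K). N \<in> renewal_set \<eta>}"

end

theory Submission
  imports Defs "HOL-Computational_Algebra.Polynomial" "HOL-Real_Asymp.Real_Asymp" "HOL-Complex_Analysis.Complex_Analysis"
begin

fun fdiff :: "nat \<Rightarrow> (nat \<Rightarrow> real) \<Rightarrow> nat \<Rightarrow> real" where
  "fdiff 0 u N = u N"
| "fdiff (Suc n) u N = fdiff n u N - fdiff n u (Suc N)"

locale pm =
  fixes \<mu> :: "real measure"
  assumes P: "prob_space \<mu>" and S: "sets \<mu> = sets borel" and AE01: "AE x in \<mu>. x \<in> {0..1}"
begin

interpretation prob_space \<mu> by (rule P)

lemma meas_cont: "continuous_on UNIV f \<Longrightarrow> f \<in> borel_measurable \<mu>"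
  using borel_measurable_continuous_onI measurable_cong_sets[OF S refl] by blast

lemma poly_bound01: "\<exists>B. \<forall>x\<in>{0..1::real}. norm (poly p x) \<le> B"
proof -
  have "compact (poly p ` {0..1::real})"
    by (intro compact_continuous_image continuous_intros) auto
  then have "bounded (poly p ` {0..1::real})" by (rule compact_imp_bounded)
  then show ?thesis by (auto simp: bounded_iff)
qed

lemma int_poly: "integrable \<mu> (\<lambda>x. poly p x)"
proof -
  obtain B where B: "\<forall>x\<in>{0..1::real}. norm (poly p x) \<le> B" using poly_bound01 by blast
  show ?thesis
  proof (rule integrable_const_bound[where B=B])
    show "AE x in \<mu>. norm (poly p x) \<le> B" using AE01 by eventually_elim (use B in auto)
    show "(\<lambda>x. poly p x) \<in> borel_measurable \<mu>" by (intro meas_cont continuous_intros)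
  qed
qed

lemma nn3: "0 \<le> (a::real) \<Longrightarrow> 0 \<le> a*b*b" by (simp add: mult.assoc)
lemma nn4: "0 \<le> (a::real) \<Longrightarrow> 0 \<le> c \<Longrightarrow> 0 \<le> a*c*b*b" by (simp add: mult.assoc)

definition L :: "real poly \<Rightarrow> real" where "L q = (\<integral>x. poly q x \<partial>\<mu>)"

lemma L_add: "L (p + q) = L p + L q"
  unfolding L_def poly_add[abs_def] by (simp add: int_poly)
lemma L_diff: "L (p - q) = L p - L q"
  unfolding L_def poly_diff[abs_def] by (simp add: int_poly)
lemma L_smult: "L (smult a p) = a * L p"
  unfolding L_def poly_smult[abs_def] by simp
lemma L_const: "L [:a:] = a"
proof -
  have "poly [:a:] = (\<lambda>x. a)" by auto
  then show ?thesis unfolding L_def by (simp add: prob_space)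
qed
lemma L_zero[simp]: "L 0 = 0"
proof -
  have "poly 0 = (\<lambda>x::real. 0)" by auto
  then show ?thesis unfolding L_def by simp
qed
lemma L_sum: "finite A \<Longrightarrow> L (\<Sum>i\<in>A. f i) = (\<Sum>i\<in>A. L (f i))"
  by (induction A rule: finite_induct) (simp_all add: L_add)
lemma L_nonneg: "(\<And>x. x \<in> {0..1} \<Longrightarrow> poly q x \<ge> 0) \<Longrightarrow> L q \<ge> 0"
  unfolding L_def by (rule integral_nonneg_AE) (use AE01 in \<open>eventually_elim, auto\<close>)

lemma peq: "(\<And>x. poly p x = poly q x) \<Longrightarrow> p = (q::real poly)"
  by (simp add: poly_eq_poly_eq_iff[symmetric] fun_eq_iff)

definition Y :: "real poly" where "Y = [:0,1:]"
definition Z :: "real poly" where "Z = [:1,-1:]"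
lemma poly_Y[simp]: "poly Y x = x" by (simp add: Y_def)
lemma poly_Z[simp]: "poly Z x = 1 - x" by (simp add: Z_def)

lemma CS: "(L (Y*F*G))^2 \<le> L (Y*F*F) * L (Y*G*G)"
proof -
  have q: "L (Y*F*F) + 2*t*L (Y*F*G) + t^2 * L(Y*G*G) \<ge> 0" for t
  proof -
    have "L (Y*(F + smult t G)*(F + smult t G)) \<ge> 0"
      by (rule L_nonneg) (auto intro: nn3)
    also have "Y*(F + smult t G)*(F + smult t G) = Y*F*F + smult (2*t) (Y*F*G) + smult (t^2) (Y*G*G)"
      by (rule peq) (simp add: algebra_simps power2_eq_square)
    finally show ?thesis by (simp add: L_add L_smult)
  qed
  define a where "a = L (Y*G*G)"
  define b where "b = L (Y*F*G)"
  define c where "c = L (Y*F*F)"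
  have q': "c + 2*t*b + t^2*a \<ge> 0" for t using q[of t] by (simp add: a_def b_def c_def)
  have a0: "a \<ge> 0" unfolding a_def by (rule L_nonneg) (auto intro: nn3)
  show ?thesis
  proof (cases "a = 0")
    case True
    have "b = 0"
    proof (rule ccontr)
      assume "b \<noteq> 0"
      have "c + 2*(-(c+1)/(2*b))*b + (-(c+1)/(2*b))^2*a \<ge> 0" by (rule q')
      with True \<open>b\<noteq>0\<close> show False by (simp add: field_simps)
    qed
    then show ?thesis using True by (simp add: a_def b_def c_def)
  next
    case False
    then have a: "a > 0" using a0 by simp
    have "c + 2*(-b/a)*b + (-b/a)^2*a \<ge> 0" by (rule q')
    then have "c - b^2/a \<ge> 0" using a by (simp add: field_simps power2_eq_square)
    then have "b^2 \<le> c * a" using a by (simp add: field_simps)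
    then show ?thesis by (simp add: a_def b_def c_def mult.commute)
  qed
qed

type_synonym pv = "real \<times> real poly"

definition ip :: "pv \<Rightarrow> pv \<Rightarrow> real" where
  "ip a b = fst a * fst b + L (Y*Z* snd a* snd b)"
definition T :: "pv \<Rightarrow> pv" where
  "T a = (fst a * L Y + L (Y*Z* snd a), [:fst a:] + Z * snd a)"
definition Sd :: "pv \<Rightarrow> pv" where
  "Sd a = (fst a - fst (T a), snd a - snd (T a))"
definition vsub :: "pv \<Rightarrow> pv \<Rightarrow> pv" where
  "vsub a b = (fst a - fst b, snd a - snd b)"

definition F :: "pv \<Rightarrow> real poly" where "F a = [:fst a:] + Z * snd a"

lemma B_eq: "ip (T a) b = L (Y * F a * F b)"
proof -
  have "Y * F a * F b = smult (fst a * fst b) Y + smult (fst b) (Y*Z* snd a) + Y*Z*([:fst a:] + Z * snd a)* snd b"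
    by (rule peq) (simp add: F_def algebra_simps)
  then show ?thesis by (simp add: ip_def T_def L_add L_smult algebra_simps)
qed

lemma ip_sym: "ip a b = ip b a"
proof -
  have "Y*Z* snd a * snd b = Y*Z* snd b * snd a" by (simp add: mult.assoc mult.commute)
  then show ?thesis unfolding ip_def by (metis mult.commute)
qed

lemma T_sym: "ip (T a) b = ip a (T b)"
proof -
  have "Y * F a * F b = Y * F b * F a" by (simp add: mult.assoc mult.commute)
  then show ?thesis by (metis B_eq ip_sym)
qed

lemma ip_vsub: "ip (vsub a b) c = ip a c - ip b c"
proof -
  have "Y*Z*(snd a - snd b)* snd c = Y*Z* snd a * snd c - Y*Z* snd b * snd c"
    by (rule peq) (simp add: algebra_simps)
  then show ?thesis by (simp add: ip_def vsub_def L_diff algebra_simps)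
qed

lemma Sd_vsub: "Sd a = vsub a (T a)" by (simp add: Sd_def vsub_def)

lemma T_vsub: "T (vsub a b) = vsub (T a) (T b)"
proof -
  have "Y*Z*(snd a - snd b) = Y*Z* snd a - Y*Z* snd b"
    by (rule peq) (simp add: algebra_simps)
  moreover have "[:fst a - fst b:] + Z * (snd a - snd b) = [:fst a:] + Z * snd a - ([:fst b:] + Z * snd b)"
    by (rule peq) (simp add: algebra_simps)
  ultimately show ?thesis by (simp add: T_def vsub_def L_diff algebra_simps)
qed

lemma ip_vsub2: "ip c (vsub a b) = ip c a - ip c b"
  by (simp add: ip_sym[of c] ip_vsub)

lemma S_sym: "ip (Sd a) b = ip a (Sd b)"
  by (simp add: Sd_vsub ip_vsub ip_vsub2 T_sym)

lemma ip_nonneg: "ip a a \<ge> 0"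
proof -
  have "L (Y*Z* snd a * snd a) \<ge> 0" by (rule L_nonneg) (auto intro: nn4)
  then show ?thesis by (simp add: ip_def)
qed

lemma T_nonneg: "ip (T a) a \<ge> 0"
  by (simp add: B_eq) (rule L_nonneg, auto intro: nn3)

lemma T_le: "ip (Sd a) a \<ge> 0"
proof -
  have e: "ip a a - ip (T a) a = L (Z * ([:fst a:] - Y * snd a) * ([:fst a:] - Y * snd a))"
  proof -
    have "Z * ([:fst a:] - Y * snd a) * ([:fst a:] - Y * snd a) =
      [:fst a * fst a:] + Y*Z* snd a * snd a - Y * F a * F a"
      by (rule peq) (simp add: F_def algebra_simps)
    then have "L (Z * ([:fst a:] - Y * snd a) * ([:fst a:] - Y * snd a)) =
      L [:fst a * fst a:] + L (Y*Z* snd a * snd a) - L (Y * F a * F a)"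
      by (simp only: L_add L_diff)
    then show ?thesis unfolding B_eq by (simp add: ip_def L_const)
  qed
  have "L (Z * ([:fst a:] - Y * snd a) * ([:fst a:] - Y * snd a)) \<ge> 0"
    by (rule L_nonneg) (auto intro: nn3)
  then show ?thesis using e by (simp add: Sd_vsub ip_vsub)
qed

lemma TS_comm: "T (Sd a) = Sd (T a)"
  by (simp add: Sd_vsub T_vsub)

lemma Tpow_S: "(T^^i) (Sd a) = Sd ((T^^i) a)"
  by (induction i) (simp_all add: TS_comm)
lemma T_Spow: "T ((Sd^^j) a) = (Sd^^j) (T a)"
  by (induction j) (simp_all add: TS_comm)
lemma Tpow_Spow: "(T^^i) ((Sd^^j) a) = (Sd^^j) ((T^^i) a)"
  by (induction j arbitrary: a) (simp_all add: Tpow_S)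

lemma case11: "ip (T (Sd a)) a \<ge> 0"
proof -
  define x where "x = ip (T a) (T a)"
  have x0: "x \<ge> 0" unfolding x_def by (rule ip_nonneg)
  have "ip (T (Sd a)) a = ip (T a) a - ip (T (T a)) a"
    by (simp add: Sd_vsub T_vsub ip_vsub)
  moreover have "ip (T (T a)) a = x" unfolding x_def by (simp add: T_sym)
  moreover have "x \<le> ip (T a) a"
  proof -
    have cs: "x^2 \<le> ip (T a) a * ip (T (T a)) (T a)"
      using CS[of "F a" "F (T a)"] unfolding x_def
      by (simp add: B_eq mult.commute mult.left_commute)
    have "ip (T (T a)) (T a) \<le> x"
      using T_le[of "T a"] unfolding x_def by (simp add: Sd_vsub ip_vsub)
    then have "ip (T a) a * ip (T (T a)) (T a) \<le> ip (T a) a * x"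
      by (rule mult_left_mono) (use T_nonneg[of a] in auto)
    with cs have "x * x \<le> ip (T a) a * x" by (simp add: power2_eq_square)
    then show ?thesis using x0
      by (cases "x = 0") (simp_all add: T_nonneg)
  qed
  ultimately show ?thesis by simp
qed

lemma pos_main: "ip ((T^^i) ((Sd^^j) a)) a \<ge> 0"
proof (induction "i+j" arbitrary: i j a rule: less_induct)
  case less
  show ?case
  proof (cases "i \<ge> 2")
    case True
    then obtain k where i: "i = Suc (Suc k)" by (metis add_2_eq_Suc le_Suc_ex)
    have "(T^^i) ((Sd^^j) a) = T ((T^^k) (T ((Sd^^j) a)))"
      unfolding i by (simp add: funpow_swap1)
    then have "(T^^i) ((Sd^^j) a) = T ((T^^k) ((Sd^^j) (T a)))"
      by (simp only: T_Spow)
    then have "ip ((T^^i) ((Sd^^j) a)) a = ip ((T^^k) ((Sd^^j) (T a))) (T a)"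
      by (simp add: T_sym)
    also have "\<dots> \<ge> 0" using less[of k j "T a"] i by simp
    finally show ?thesis .
  next
    case False
    show ?thesis
    proof (cases "j \<ge> 2")
      case True
      then obtain k where j: "j = Suc (Suc k)" by (metis add_2_eq_Suc le_Suc_ex)
      have "(T^^i) ((Sd^^j) a) = (Sd^^j) ((T^^i) a)" by (rule Tpow_Spow)
      also have "\<dots> = Sd ((Sd^^k) (Sd ((T^^i) a)))" unfolding j by (simp only: funpow_swap1 funpow.simps comp_apply)
      also have "Sd ((T^^i) a) = (T^^i) (Sd a)" by (rule Tpow_S[symmetric])
      also have "(Sd^^k) ((T^^i) (Sd a)) = (T^^i) ((Sd^^k) (Sd a))" by (rule Tpow_Spow[symmetric])
      finally have "(T^^i) ((Sd^^j) a) = Sd ((T^^i) ((Sd^^k) (Sd a)))" .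
      then have "ip ((T^^i) ((Sd^^j) a)) a = ip ((T^^i) ((Sd^^k) (Sd a))) (Sd a)"
        by (simp add: S_sym)
      also have "\<dots> \<ge> 0" using less[of i k "Sd a"] j by simp
      finally show ?thesis .
    next
      case False
      with \<open>\<not> i \<ge> 2\<close> have "i \<in> {0,1}" "j \<in> {0,1}" by auto
      then show ?thesis
        using ip_nonneg[of a] T_nonneg[of a] T_le[of a] case11[of a] by auto
    qed
  qed
qed

definition e0 ::pv where "e0 = (1, 0)"

definition cseq :: "nat \<Rightarrow> real" where "cseq M = fst ((T^^M) e0)"

lemma ip_e0: "ip a e0 = fst a" by (simp add: ip_def e0_def)

lemma Tpow_vsub: "(T^^i) (vsub a b) = vsub ((T^^i) a) ((T^^i) b)"
  by (induction i) (simp_all add: T_vsub)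
lemma Spow_vsub: "(Sd^^j) (vsub a b) = vsub ((Sd^^j) a) ((Sd^^j) b)"
proof -
  have "Sd (vsub a b) = vsub (Sd a) (Sd b)" for a b
    by (simp add: Sd_vsub T_vsub) (simp add: vsub_def)
  then show ?thesis by (induction j) simp_all
qed

lemma fdiff_c: "fst ((T^^N) ((Sd^^n) e0)) = fdiff n cseq N"
proof (induction n arbitrary: N)
  case 0 then show ?case by (simp add: cseq_def)
next
  case (Suc n)
  have "(T^^N) ((Sd^^Suc n) e0) = (T^^N) (Sd ((Sd^^n) e0))" by (simp only: funpow.simps comp_apply)
  also have "\<dots> = vsub ((T^^N) ((Sd^^n) e0)) ((T^^N) (T ((Sd^^n) e0)))"
    by (simp only: Sd_vsub Tpow_vsub)
  also have "(T^^N) (T ((Sd^^n) e0)) = (T^^Suc N) ((Sd^^n) e0)" by (simp only: funpow_swap1 funpow.simps comp_apply)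
  finally show ?case using Suc.IH[of N] Suc.IH[of "Suc N"] by (simp add: vsub_def)
qed

lemma cseq_cm: "fdiff n cseq N \<ge> 0"
  using pos_main[of N n e0] by (simp add: ip_e0 fdiff_c)

definition Kp :: "nat \<Rightarrow> real" where "Kp k = L (Y * Z^(k-1))"

lemma snd_Tpow: "snd ((T^^M) e0) = (\<Sum>j<M. smult (cseq j) (Z^(M-1-j)))"
proof (induction M)
  case 0 then show ?case by (simp add: e0_def)
next
  case (Suc M)
  have "snd ((T^^Suc M) e0) = [:cseq M:] + Z * snd ((T^^M) e0)"
    by (simp add: T_def cseq_def)
  also have "\<dots> = (\<Sum>j<Suc M. smult (cseq j) (Z^(Suc M-1-j)))"
  proof (rule peq)
    fix x :: real
    have "(\<Sum>j<M. cseq j * (1 - x) ^ (M - j)) = (\<Sum>j<M. (1-x) * (cseq j * (1 - x) ^ (M - 1 - j)))"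
    proof (rule sum.cong)
      fix j assume "j \<in> {..<M}"
      then have "M - j = Suc (M - 1 - j)" by auto
      then show "cseq j * (1 - x) ^ (M - j) = (1-x) * (cseq j * (1 - x) ^ (M - 1 - j))" by simp
    qed simp
    then show "poly ([:cseq M:] + Z * snd ((T^^M) e0)) x = poly (\<Sum>j<Suc M. smult (cseq j) (Z^(Suc M-1-j))) x"
      unfolding Suc by (simp add: poly_sum sum_distrib_left mult_ac)
  qed
  finally show ?case .
qed

lemma cseq_rec: "cseq (Suc M) = (\<Sum>j\<le>M. cseq j * Kp (Suc M - j))"
proof -
  have "cseq (Suc M) = cseq M * L Y + L (Y*Z* snd ((T^^M) e0))"
    by (simp add: cseq_def T_def)
  also have "Y*Z* snd ((T^^M) e0) = (\<Sum>j<M. smult (cseq j) (Y * Z^(Suc M - 1 - j)))"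
  proof (rule peq)
    fix x :: real
    show "poly (Y*Z* snd ((T^^M) e0)) x = poly (\<Sum>j<M. smult (cseq j) (Y * Z^(Suc M - 1 - j))) x"
      unfolding snd_Tpow poly_mult poly_sum sum_distrib_left
    proof (rule sum.cong)
      fix j assume "j \<in> {..<M}"
      then have "Suc M - 1 - j = Suc (M - 1 - j)" by auto
      then show "poly Y x * poly Z x * poly (smult (cseq j) (Z ^ (M - 1 - j))) x =
         poly (smult (cseq j) (Y * Z ^ (Suc M - 1 - j))) x" by simp
    qed simp
  qed
  also have "L (\<Sum>j<M. smult (cseq j) (Y * Z^(Suc M - 1 - j))) = (\<Sum>j<M. cseq j * Kp (Suc M - j))"
    by (simp add: L_sum L_smult Kp_def)
  finally show ?thesis by (simp add: Kp_def lessThan_Suc_atMost[symmetric])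
qed

lemma Kp_eq: "k \<ge> 1 \<Longrightarrow> Kp k = (\<integral>x. (1 - x) ^ (k - 1) * x \<partial>\<mu>)"
proof -
  have "poly (Y*Z^(k-1)) = (\<lambda>x. (1 - x)^(k-1)*x)" by (auto simp: poly_power fun_eq_iff)
  then show ?thesis unfolding Kp_def L_def by simp
qed

lemma cseq0: "cseq 0 = 1" by (simp add: cseq_def e0_def)

end

lemma seq_space: "sequence_space (measure_pmf K)"
  unfolding sequence_space_def product_prob_space_def product_prob_space_axioms_def product_sigma_finite_def
  by (auto intro: prob_space_measure_pmf prob_space_imp_sigma_finite)

lemma space_S: "space (PiM UNIV (\<lambda>_. measure_pmf K)) = UNIV"
  by (auto simp: space_PiM)

lemma meas_comp: "(\<lambda>\<eta>. \<eta> n) \<in> measurable (PiM UNIV (\<lambda>_. measure_pmf K)) (count_space UNIV)"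
proof -
  have "(\<lambda>\<eta>. \<eta> n) \<in> measurable (PiM UNIV (\<lambda>_. measure_pmf K)) (measure_pmf K)"
    by (rule measurable_component_singleton) simp
  then show ?thesis by (simp add: measurable_cong_sets)
qed

lemma meas_sum: fixes n :: nat shows "(\<lambda>\<eta>. \<Sum>i<n. \<eta> i :: enat) \<in> measurable (PiM UNIV (\<lambda>_. measure_pmf K)) (count_space UNIV)"
proof (induction n)
  case 0 then show ?case by simp
next
  case (Suc n)
  have ma: "(\<lambda>\<eta>. a + \<eta> n) \<in> measurable (PiM UNIV (\<lambda>_. measure_pmf K)) (count_space UNIV)" for a :: enat
    by (rule measurable_compose[OF meas_comp, where g="\<lambda>e. a + e"]) simp
  have "(\<lambda>\<eta>. (\<lambda>a \<eta>. a + \<eta> n) (\<Sum>i<n. \<eta> i) \<eta>) \<in> measurable (PiM UNIV (\<lambda>_. measure_pmf K)) (count_space UNIV)"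
    by (rule measurable_compose_countable'[where f="\<lambda>a \<eta>. a + \<eta> n" and g="\<lambda>\<eta>. \<Sum>i<n. \<eta> i" and I=UNIV, OF ma Suc.IH]) simp
  then show ?case by simp
qed

definition Ev :: "enat pmf \<Rightarrow> nat \<Rightarrow> (nat \<Rightarrow> enat) set" where
  "Ev K N = {\<eta> \<in> space (PiM UNIV (\<lambda>_. measure_pmf K)). N \<in> renewal_set \<eta>}"

lemma Ev_sets: "Ev K N \<in> sets (PiM UNIV (\<lambda>_. measure_pmf K))"
proof -
  have "Ev K N = (\<Union>n. (\<lambda>\<eta>. \<Sum>i<n. \<eta> i) -` {enat N} \<inter> space (PiM UNIV (\<lambda>_. measure_pmf K)))"
    by (auto simp: Ev_def renewal_set_def)
  also have "\<dots> \<in> sets (PiM UNIV (\<lambda>_. measure_pmf K))"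
    using meas_sum by (intro sets.countable_UN) (auto simp: measurable_def)
  finally show ?thesis .
qed

lemma renewal_prob_Ev: "renewal_prob K N = measure (PiM UNIV (\<lambda>_. measure_pmf K)) (Ev K N)"
  by (simp add: renewal_prob_def renewal_seq_law_def Ev_def)

lemma u0: "renewal_prob K 0 = 1"
proof -
  interpret sequence_space "measure_pmf K" by (rule seq_space)
  have "Ev K 0 = space S"
    by (auto simp: Ev_def renewal_set_def intro!: exI[of _ 0] simp: zero_enat_def)
  then show ?thesis using P.prob_space by (simp add: renewal_prob_Ev)
qed

lemma renewal_case_nat:
  "Suc N \<in> renewal_set (case_nat s \<omega>) \<longleftrightarrow>
    (s = 0 \<and> Suc N \<in> renewal_set \<omega>) \<or> (\<exists>k. s = enat k \<and> 1 \<le> k \<and> k \<le> Suc N \<and> Suc N - k \<in> renewal_set \<omega>)"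
proof -
  have sumS: "(\<Sum>i<Suc m. case_nat s \<omega> i) = s + (\<Sum>i<m. \<omega> i)" for m
    unfolding sum.lessThan_Suc_shift by simp
  have "Suc N \<in> renewal_set (case_nat s \<omega>) \<longleftrightarrow> (\<exists>m. s + (\<Sum>i<m. \<omega> i) = enat (Suc N))"
    unfolding renewal_set_def
  proof safe
    fix n assume "(\<Sum>i<n. case_nat s \<omega> i) = enat (Suc N)"
    then show "\<exists>m. s + (\<Sum>i<m. \<omega> i) = enat (Suc N)"
    proof (cases n)
      case (Suc m) then show ?thesis using \<open>(\<Sum>i<n. case_nat s \<omega> i) = enat (Suc N)\<close> sumS[of m] by metis
    qed (auto simp: zero_enat_def)
  next
    fix m assume "s + (\<Sum>i<m. \<omega> i) = enat (Suc N)"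
    then show "\<exists>n. (\<Sum>i<n. case_nat s \<omega> i) = enat (Suc N)"
      by (intro exI[of _ "Suc m"]) (simp only: sumS)
  qed
  also have "\<dots> \<longleftrightarrow> (s = 0 \<and> Suc N \<in> renewal_set \<omega>) \<or> (\<exists>k. s = enat k \<and> 1 \<le> k \<and> k \<le> Suc N \<and> Suc N - k \<in> renewal_set \<omega>)"
  proof
    assume "\<exists>m. s + (\<Sum>i<m. \<omega> i) = enat (Suc N)"
    then obtain m where m: "s + (\<Sum>i<m. \<omega> i) = enat (Suc N)" by blast
    then obtain k j where kj: "s = enat k" "(\<Sum>i<m. \<omega> i) = enat j" "k + j = Suc N"
      by (cases s; cases "\<Sum>i<m. \<omega> i") auto
    show "(s = 0 \<and> Suc N \<in> renewal_set \<omega>) \<or> (\<exists>k. s = enat k \<and> 1 \<le> k \<and> k \<le> Suc N \<and> Suc N - k \<in> renewal_set \<omega>)"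
    proof (cases "k = 0")
      case True then show ?thesis using kj by (auto simp: renewal_set_def zero_enat_def)
    next
      case False
      then have "Suc N - k = j" using kj by auto
      then show ?thesis using kj False by (auto simp: renewal_set_def)
    qed
  next
    assume "(s = 0 \<and> Suc N \<in> renewal_set \<omega>) \<or> (\<exists>k. s = enat k \<and> 1 \<le> k \<and> k \<le> Suc N \<and> Suc N - k \<in> renewal_set \<omega>)"
    then show "\<exists>m. s + (\<Sum>i<m. \<omega> i) = enat (Suc N)"
    proof
      assume "s = 0 \<and> Suc N \<in> renewal_set \<omega>" then show ?thesis by (auto simp: renewal_set_def)
    next
      assume "\<exists>k. s = enat k \<and> 1 \<le> k \<and> k \<le> Suc N \<and> Suc N - k \<in> renewal_set \<omega>"
      then obtain k m where "s = enat k" "k \<le> Suc N" "(\<Sum>i<m. \<omega> i) = enat (Suc N - k)"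
        by (auto simp: renewal_set_def)
      then show ?thesis by (intro exI[of _ m]) simp
    qed
  qed
  finally show ?thesis .
qed

lemma urec:
  assumes K0: "pmf K 0 = 0"
  shows "renewal_prob K (Suc N) = (\<Sum>k=1..Suc N. pmf K (enat k) * renewal_prob K (Suc N - k))"
proof -
  interpret sequence_space "measure_pmf K" by (rule seq_space)
  let ?f = "\<lambda>(s, \<omega>). case_nat s \<omega>"
  have fm: "?f \<in> measurable (measure_pmf K \<Otimes>\<^sub>M S) S"
  proof (rule measurable_PiM_single')
    fix i :: nat
    show "(\<lambda>\<omega>. ?f \<omega> i) \<in> measurable (measure_pmf K \<Otimes>\<^sub>M S) (measure_pmf K)"
    proof (cases i)
      case 0
      have "(\<lambda>\<omega>. ?f \<omega> i) = fst" using 0 by (simp add: fun_eq_iff split: prod.split)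
      then show ?thesis by (subst \<open>(\<lambda>\<omega>. ?f \<omega> i) = fst\<close>) (rule measurable_fst)
    next
      case (Suc j)
      have e: "(\<lambda>\<omega>. ?f \<omega> i) = (\<lambda>\<omega>. (\<lambda>x. x j) (snd \<omega>))" using Suc by (simp add: fun_eq_iff split: prod.split)
      show ?thesis unfolding e
        by (rule measurable_compose[OF measurable_snd measurable_component_singleton]) simp
    qed
  next
    show "?f \<in> space (measure_pmf K \<Otimes>\<^sub>M S) \<rightarrow> (UNIV \<rightarrow>\<^sub>E space (measure_pmf K))"
      by simp
  qed
  have pre: "Pair s -` (?f -` Ev K (Suc N) \<inter> space (measure_pmf K \<Otimes>\<^sub>M S)) = {\<omega>. Suc N \<in> renewal_set (case_nat s \<omega>)}" for s
    by (auto simp: Ev_def space_pair_measure space_PiM)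
  have "emeasure S (Ev K (Suc N)) = emeasure (distr (measure_pmf K \<Otimes>\<^sub>M S) S ?f) (Ev K (Suc N))"
    by (simp only: PiM_iter)
  also have "\<dots> = emeasure (measure_pmf K \<Otimes>\<^sub>M S) (?f -` Ev K (Suc N) \<inter> space (measure_pmf K \<Otimes>\<^sub>M S))"
    by (rule emeasure_distr[OF fm Ev_sets])
  also have "\<dots> = (\<integral>\<^sup>+ s. emeasure S (Pair s -` (?f -` Ev K (Suc N) \<inter> space (measure_pmf K \<Otimes>\<^sub>M S))) \<partial>measure_pmf K)"
    by (rule P.emeasure_pair_measure_alt) (rule measurable_sets[OF fm Ev_sets])
  also have "\<dots> = (\<Sum>s\<in>enat ` {1..Suc N}. emeasure S (Pair s -` (?f -` Ev K (Suc N) \<inter> space (measure_pmf K \<Otimes>\<^sub>M S))) * pmf K s)"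
  proof (rule nn_integral_measure_pmf_support)
    fix s assume s: "s \<in> set_pmf K" "s \<notin> enat ` {1..Suc N}"
    have "s \<noteq> 0" using s K0 by (auto simp: set_pmf_iff)
    have "Pair s -` (?f -` Ev K (Suc N) \<inter> space (measure_pmf K \<Otimes>\<^sub>M S)) = {}"
      unfolding pre
    proof (rule equals0I)
      fix \<omega> assume "\<omega> \<in> {\<omega>. Suc N \<in> renewal_set (case_nat s \<omega>)}"
      then have "Suc N \<in> renewal_set (case_nat s \<omega>)" by simp
      then show False unfolding renewal_case_nat using s \<open>s \<noteq> 0\<close> by force
    qed
    then show "emeasure S (Pair s -` (?f -` Ev K (Suc N) \<inter> space (measure_pmf K \<Otimes>\<^sub>M S))) = 0" by simp
  qed simp_all
  also have "\<dots> = (\<Sum>k=1..Suc N. ennreal (renewal_prob K (Suc N - k)) * pmf K (enat k))"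
  proof (subst sum.reindex)
    show "inj_on enat {1..Suc N}" by (auto intro: inj_onI)
    show "(\<Sum>k = 1..Suc N. ((\<lambda>s. emeasure S (Pair s -` (?f -` Ev K (Suc N) \<inter> space (measure_pmf K \<Otimes>\<^sub>M S))) * ennreal (pmf K s)) \<circ> enat) k) =
      (\<Sum>k = 1..Suc N. ennreal (renewal_prob K (Suc N - k)) * ennreal (pmf K (enat k)))"
    proof (rule sum.cong)
      fix k assume k: "k \<in> {1..Suc N}"
      have "Pair (enat k) -` (?f -` Ev K (Suc N) \<inter> space (measure_pmf K \<Otimes>\<^sub>M S)) = Ev K (Suc N - k)"
        unfolding pre using k by (auto simp: renewal_case_nat Ev_def space_S zero_enat_def)
      then show "((\<lambda>s. emeasure S (Pair s -` (?f -` Ev K (Suc N) \<inter> space (measure_pmf K \<Otimes>\<^sub>M S))) * ennreal (pmf K s)) \<circ> enat) k =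
        ennreal (renewal_prob K (Suc N - k)) * ennreal (pmf K (enat k))"
        by (simp add: renewal_prob_Ev emeasure_eq_measure)
    qed simp
  qed
  also have "\<dots> = ennreal (\<Sum>k=1..Suc N. pmf K (enat k) * renewal_prob K (Suc N - k))"
  proof -
    have "ennreal (renewal_prob K (Suc N - k)) * ennreal (pmf K (enat k)) = ennreal (pmf K (enat k) * renewal_prob K (Suc N - k))" for k
      by (subst ennreal_mult) (auto simp: renewal_prob_Ev mult.commute)
    then have "(\<Sum>k=1..Suc N. ennreal (renewal_prob K (Suc N - k)) * pmf K (enat k)) = (\<Sum>k=1..Suc N. ennreal (pmf K (enat k) * renewal_prob K (Suc N - k)))"
      by (intro sum.cong) auto
    also have "\<dots> = ennreal (\<Sum>k=1..Suc N. pmf K (enat k) * renewal_prob K (Suc N - k))"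
      by (rule sum_ennreal) (auto simp: renewal_prob_Ev)
    finally show ?thesis .
  qed
  finally have A: "emeasure S (Ev K (Suc N)) = ennreal (\<Sum>k=1..Suc N. pmf K (enat k) * renewal_prob K (Suc N - k))" .
  have B: "emeasure S (Ev K (Suc N)) = ennreal (renewal_prob K (Suc N))"
    unfolding renewal_prob_Ev by (rule P.emeasure_eq_measure)
  have "0 \<le> (\<Sum>k=1..Suc N. pmf K (enat k) * renewal_prob K (Suc N - k))"
    by (intro sum_nonneg mult_nonneg_nonneg) (auto simp: renewal_prob_Ev)
  then show ?thesis using A B by (simp add: renewal_prob_Ev)
qed

lemma fdiff_split: "fdiff n u N = fdiff (Suc n) u N + fdiff n u (Suc N)"
  by simp

lemma D0: "fdiff a u b = (\<Sum>j\<le>m. of_nat (m choose j) * fdiff (a+m-j) u (b+j))"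
proof (induction m)
  case 0 then show ?case by simp
next
  case (Suc m)
  define f where "f = (\<lambda>x y. fdiff x u y)"
  have IH: "f a b = (\<Sum>j\<le>m. of_nat (m choose j) * f (a+m-j) (b+j))" using Suc by (simp add: f_def)
  have fs: "f x y = f (Suc x) y + f x (Suc y)" for x y unfolding f_def by simp
  define S1 where "S1 = (\<Sum>j\<le>m. of_nat (m choose j) * f (a + Suc m - j) (b+j))"
  define S2 where "S2 = (\<Sum>j\<le>m. of_nat (m choose j) * f (a + m - j) (Suc (b+j)))"
  have "f a b = (\<Sum>j\<le>m. of_nat (m choose j) * (f (a + Suc m - j) (b+j) + f (a+m-j) (Suc (b+j))))"
    unfolding IH
  proof (rule sum.cong)
    fix j assume "j \<in> {..m}"
    then have "Suc (a+m-j) = a + Suc m - j" by auto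
    then show "of_nat (m choose j) * f (a+m-j) (b+j) = of_nat (m choose j) * (f (a + Suc m - j) (b+j) + f (a+m-j) (Suc (b+j)))"
      using fs[of "a+m-j" "b+j"] by simp
  qed simp
  also have "\<dots> = S1 + S2" by (simp add: S1_def S2_def algebra_simps sum.distrib)
  finally have L: "f a b = S1 + S2" .
  have "S1 = (\<Sum>j\<le>Suc m. of_nat (m choose j) * f (a + Suc m - j) (b+j))"
    by (simp add: S1_def)
  also have "\<dots> = f (a + Suc m) b + (\<Sum>j\<le>m. of_nat (m choose Suc j) * f (a + m - j) (Suc (b+j)))"
    by (subst sum.atMost_Suc_shift) simp
  finally have S1e: "S1 = f (a + Suc m) b + (\<Sum>j\<le>m. of_nat (m choose Suc j) * f (a + m - j) (Suc (b+j)))" .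
  have "(\<Sum>j\<le>Suc m. of_nat (Suc m choose j) * f (a + Suc m - j) (b+j))
     = f (a + Suc m) b + (\<Sum>j\<le>m. of_nat (Suc m choose Suc j) * f (a + m - j) (Suc (b+j)))"
    by (subst sum.atMost_Suc_shift) simp
  also have "\<dots> = f (a + Suc m) b + (\<Sum>j\<le>m. of_nat (m choose Suc j) * f (a + m - j) (Suc (b+j))) + S2"
    by (simp add: S2_def algebra_simps sum.distrib)
  finally have R: "(\<Sum>j\<le>Suc m. of_nat (Suc m choose j) * f (a + Suc m - j) (b+j)) = S1 + S2"
    using S1e by simp
  show ?case using L R by (simp add: f_def)
qed

definition ff :: "nat \<Rightarrow> nat \<Rightarrow> real" where "ff k N = (\<Prod>i<N. real k - real i)"

lemma ff_zero: "k < N \<Longrightarrow> ff k N = 0"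
  by (auto simp: ff_def prod_zero_iff intro!: bexI[of _ k])

lemma ff_fact: "N \<le> k \<Longrightarrow> ff k N = fact k / fact (k - N)"
proof (induction N)
  case 0 then show ?case by (simp add: ff_def)
next
  case (Suc N)
  then have "k - N = Suc (k - Suc N)" by auto
  then have f: "fact (k - N) = real (k - N) * fact (k - Suc N)" by simp
  have r: "real (k - N) = real k - real N" using Suc by simp
  have "ff k (Suc N) = ff k N * (real k - real N)" by (simp add: ff_def)
  also have "\<dots> = fact k / fact (k - N) * real (k - N)" using Suc r by simp
  also have "\<dots> = fact k / fact (k - Suc N)" using Suc unfolding f by (simp add: field_simps)
  finally show ?case .
qed

lemma choose_ff: assumes "N \<le> k" "k \<le> n"
  shows "real (n choose k) * ff k N = ff n N * real ((n - N) choose (k - N))"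
proof -
  have e: "n - N - (k - N) = n - k" using assms by auto
  show ?thesis using assms
    by (simp add: ff_fact binomial_fact e field_simps)
qed

definition wt :: "(nat \<Rightarrow> real) \<Rightarrow> nat \<Rightarrow> nat \<Rightarrow> real" where
  "wt u n k = real (n choose k) * fdiff (n - k) u k"

lemma moment_identity:
  assumes "N \<le> n"
  shows "(\<Sum>k\<le>n. wt u n k * ff k N) = ff n N * u N"
proof -
  have "(\<Sum>k\<le>n. wt u n k * ff k N) = (\<Sum>k\<in>{N..n}. wt u n k * ff k N)"
    by (rule sum.mono_neutral_right) (auto simp: ff_zero)
  also have "\<dots> = (\<Sum>k\<in>{N..n}. ff n N * (real ((n - N) choose (k - N)) * fdiff (n - k) u k))"
    by (rule sum.cong) (auto simp: wt_def choose_ff[symmetric])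
  also have "\<dots> = ff n N * (\<Sum>k\<in>{N..n}. real ((n - N) choose (k - N)) * fdiff (n - k) u k)"
    by (simp add: sum_distrib_left)
  also have "(\<Sum>k\<in>{N..n}. real ((n - N) choose (k - N)) * fdiff (n - k) u k) =
      (\<Sum>j\<le>n-N. real ((n - N) choose j) * fdiff (0 + (n - N) - j) u (N + j))"
  proof -
    have "(\<Sum>k\<in>{N..n}. real ((n - N) choose (k - N)) * fdiff (n - k) u k) =
      (\<Sum>j\<in>{0..n-N}. real ((n - N) choose j) * fdiff (n - (j + N)) u (j + N))"
    proof -
      have "{N..n} = {0 + N..(n - N) + N}" using assms by simp
      then show ?thesis by (simp only: sum.shift_bounds_cl_nat_ivl add_diff_cancel_right')
    qed
    also have "\<dots> = (\<Sum>j\<le>n-N. real ((n - N) choose j) * fdiff (0 + (n - N) - j) u (N + j))"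
      by (rule sum.cong) (auto simp: add.commute)
    finally show ?thesis .
  qed
  also have "\<dots> = u N" using D0[of 0 u N "n - N"] by simp
  finally show ?thesis .
qed

lemma sum_wt: "(\<Sum>k\<le>n. wt u n k) = u 0"
  using moment_identity[of 0 n u] by (simp add: ff_def)

lemma prod_diff_bound:
  fixes a b :: "nat \<Rightarrow> real"
  assumes "\<And>i. i < N \<Longrightarrow> \<bar>a i\<bar> \<le> 1" "\<And>i. i < N \<Longrightarrow> \<bar>b i\<bar> \<le> 1"
  shows "\<bar>(\<Prod>i<N. a i) - (\<Prod>i<N. b i)\<bar> \<le> (\<Sum>i<N. \<bar>a i - b i\<bar>)"
  using assms
proof (induction N)
  case 0 then show ?case by simp
next
  case (Suc N)
  have IH: "\<bar>(\<Prod>i<N. a i) - (\<Prod>i<N. b i)\<bar> \<le> (\<Sum>i<N. \<bar>a i - b i\<bar>)" using Suc by auto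
  have pb: "\<bar>\<Prod>i<N. b i\<bar> \<le> 1" unfolding abs_prod by (rule prod_le_1) (use Suc.prems in auto)
  have aN: "\<bar>a N\<bar> \<le> 1" using Suc.prems by auto
  have "(\<Prod>i<Suc N. a i) - (\<Prod>i<Suc N. b i) = ((\<Prod>i<N. a i) - (\<Prod>i<N. b i)) * a N + (\<Prod>i<N. b i) * (a N - b N)"
    by (simp add: algebra_simps)
  then have "\<bar>(\<Prod>i<Suc N. a i) - (\<Prod>i<Suc N. b i)\<bar> \<le> \<bar>(\<Prod>i<N. a i) - (\<Prod>i<N. b i)\<bar> * \<bar>a N\<bar> + \<bar>\<Prod>i<N. b i\<bar> * \<bar>a N - b N\<bar>"
    by (metis abs_mult abs_triangle_ineq)
  also have "\<dots> \<le> \<bar>(\<Prod>i<N. a i) - (\<Prod>i<N. b i)\<bar> * 1 + 1 * \<bar>a N - b N\<bar>"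
    by (intro add_mono mult_left_mono mult_right_mono aN pb) auto
  also have "\<dots> \<le> (\<Sum>i<Suc N. \<bar>a i - b i\<bar>)" using IH by simp
  finally show ?case .
qed

lemma ratio_bound:
  assumes n: "2 * N \<le> n" and x: "0 \<le> x" "x \<le> 1"
  shows "\<bar>x ^ N - (\<Prod>i<N. (x - real i / real n) / (1 - real i / real n))\<bar> \<le> 2 * real N ^ 2 / real n"
proof -
  have np: "real n > 0" if "N > 0" using n that by simp
  have fac: "\<bar>(x - real i / real n) / (1 - real i / real n)\<bar> \<le> 1 \<and>
      \<bar>x - (x - real i / real n) / (1 - real i / real n)\<bar> \<le> 2 * real N / real n" if i: "i < N" for i
  proof -
    have n0: "real n > 0" using np i by simp
    define t where "t = real i / real n"
    have t0: "0 \<le> t" and t1: "t \<le> 1/2" using n i n0 by (auto simp: t_def field_simps)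
    have tN: "t \<le> real N / real n" using i n0 by (simp add: t_def divide_right_mono)
    have d: "1 - t > 0" using t1 by simp
    have a1: "\<bar>(x - t) / (1 - t)\<bar> \<le> 1" using d x t0 t1 by (simp add: abs_le_iff field_simps)
    have "x - (x - t) / (1 - t) = t * (1 - x) / (1 - t)" using d by (simp add: field_simps)
    moreover have "t * (1 - x) / (1 - t) \<le> 2 * t"
    proof -
      have "t * (1 - x) \<le> t * (2 * (1 - t))" by (rule mult_left_mono) (use x t1 t0 in auto)
      then show ?thesis using d by (simp add: divide_le_eq mult_ac)
    qed
    moreover have "t * (1 - x) / (1 - t) \<ge> 0" using d x t0 by simp
    ultimately have "\<bar>x - (x - t) / (1 - t)\<bar> \<le> 2 * t" by (simp only: abs_of_nonneg)
    then show ?thesis using a1 tN unfolding t_def by simp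
  qed
  have "\<bar>(\<Prod>i<N. x) - (\<Prod>i<N. (x - real i / real n) / (1 - real i / real n))\<bar>
      \<le> (\<Sum>i<N. \<bar>x - (x - real i / real n) / (1 - real i / real n)\<bar>)"
    by (rule prod_diff_bound) (use fac x in auto)
  also have "\<dots> \<le> (\<Sum>i<N. 2 * real N / real n)" by (rule sum_mono) (use fac in auto)
  also have "\<dots> = 2 * real N ^ 2 / real n" by (simp add: power2_eq_square)
  finally show ?thesis by simp
qed

lemma ff_ratio:
  assumes "N \<le> n" "k \<le> n" "n > 0"
  shows "ff k N / ff n N = (\<Prod>i<N. (real k / real n - real i / real n) / (1 - real i / real n))"
proof -
  have "(\<Prod>i<N. (real k / real n - real i / real n) / (1 - real i / real n)) = (\<Prod>i<N. (real k - real i) / (real n - real i))"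
  proof (rule prod.cong)
    fix i assume "i \<in> {..<N}"
    then show "(real k / real n - real i / real n) / (1 - real i / real n) = (real k - real i) / (real n - real i)"
      using assms by (simp add: field_simps)
  qed simp
  then show ?thesis by (simp add: ff_def prod_dividef)
qed

lemma ff_pos: "N \<le> n \<Longrightarrow> ff n N > 0"
  unfolding ff_def by (rule prod_pos) auto

locale cmseq =
  fixes u :: "nat \<Rightarrow> real"
  assumes u0: "u 0 = 1" and cm: "\<And>n N. fdiff n u N \<ge> 0"
begin

lemma wt_nonneg: "wt u n k \<ge> 0" by (simp add: wt_def cm)

lemma wt_sum: "(\<Sum>k\<le>n. wt u n k) = 1" using sum_wt u0 by simp

definition mom :: "nat \<Rightarrow> nat \<Rightarrow> real" where
  "mom n N = (\<Sum>k\<le>n. wt u n k * (real k / real n) ^ N)"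

lemma mom_close:
  assumes "2 * N \<le> n" "n > 0"
  shows "\<bar>mom n N - u N\<bar> \<le> 2 * real N ^ 2 / real n"
proof -
  have Nn: "N \<le> n" using assms by simp
  have "u N = (\<Sum>k\<le>n. wt u n k * ff k N) / ff n N" using moment_identity[OF Nn, of u] ff_pos[OF Nn] by simp
  also have "\<dots> = (\<Sum>k\<le>n. wt u n k * (ff k N / ff n N))" by (simp add: sum_divide_distrib)
  finally have uN: "u N = (\<Sum>k\<le>n. wt u n k * (ff k N / ff n N))" .
  have "\<bar>mom n N - u N\<bar> = \<bar>\<Sum>k\<le>n. wt u n k * ((real k / real n) ^ N - ff k N / ff n N)\<bar>"
    unfolding mom_def uN by (simp add: sum_subtractf algebra_simps)
  also have "\<dots> \<le> (\<Sum>k\<le>n. \<bar>wt u n k * ((real k / real n) ^ N - ff k N / ff n N)\<bar>)" by (rule sum_abs)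
  also have "\<dots> \<le> (\<Sum>k\<le>n. wt u n k * (2 * real N ^ 2 / real n))"
  proof (rule sum_mono)
    fix k assume k: "k \<in> {..n}"
    have kn: "k \<le> n" using k by simp
    have "\<bar>(real k / real n) ^ N - ff k N / ff n N\<bar> \<le> 2 * real N ^ 2 / real n"
      unfolding ff_ratio[OF Nn kn assms(2)]
      by (rule ratio_bound[OF assms(1)]) (use kn assms(2) in \<open>auto simp: field_simps\<close>)
    then show "\<bar>wt u n k * ((real k / real n) ^ N - ff k N / ff n N)\<bar> \<le> wt u n k * (2 * real N ^ 2 / real n)"
      using wt_nonneg[of n k] by (simp add: abs_mult mult_left_mono flip: times_divide_eq_right)
  qed
  also have "\<dots> = (\<Sum>k\<le>n. wt u n k) * (2 * real N ^ 2 / real n)" by (rule sum_distrib_right[symmetric])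
  also have "\<dots> = 2 * real N ^ 2 / real n" by (simp only: wt_sum mult_1)
  finally show ?thesis .
qed

lemma mom_lim: "(\<lambda>n. mom n N) \<longlonglongrightarrow> u N"
proof -
  have "(\<lambda>n. 2 * real N ^ 2 / real n) \<longlonglongrightarrow> 0" by real_asymp
  show ?thesis
  proof (rule LIMSEQ_I)
    fix r :: real assume r: "r > 0"
    from \<open>(\<lambda>n. 2 * real N ^ 2 / real n) \<longlonglongrightarrow> 0\<close> r obtain M where M: "\<And>n. n \<ge> M \<Longrightarrow> norm (2 * real N ^ 2 / real n - 0) < r"
      by (metis LIMSEQ_D)
    show "\<exists>no. \<forall>n\<ge>no. norm (mom n N - u N) < r"
    proof (intro exI allI impI)
      fix n assume "n \<ge> max M (2 * N + 1)"
      then have "2 * N \<le> n" "n > 0" "n \<ge> M" by auto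
      then show "norm (mom n N - u N) < r"
        using mom_close[of N n] M[of n] by simp
    qed
  qed
qed

end

context cmseq
begin

definition pw :: "nat \<Rightarrow> nat \<Rightarrow> real" where "pw n k = (if k \<le> n then wt u n k else 0)"

lemma pw_nonneg: "pw n k \<ge> 0" by (simp add: pw_def wt_nonneg)

lemma pw_prob: "(\<integral>\<^sup>+x. ennreal (pw n x) \<partial>count_space UNIV) = 1"
proof -
  have "(\<integral>\<^sup>+x. ennreal (pw n x) \<partial>count_space UNIV) = (\<Sum>x\<le>n. ennreal (pw n x))"
    by (rule nn_integral_count_space') (auto simp: pw_def)
  also have "\<dots> = ennreal (\<Sum>x\<le>n. pw n x)" by (rule sum_ennreal) (simp add: pw_nonneg)
  also have "(\<Sum>x\<le>n. pw n x) = 1" using wt_sum[of n] by (simp add: pw_def)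
  finally show ?thesis by simp
qed

definition pn :: "nat \<Rightarrow> nat pmf" where "pn n = embed_pmf (pw n)"

lemma pmf_pn: "pmf (pn n) k = pw n k"
  unfolding pn_def by (rule pmf_embed_pmf) (auto simp: pw_nonneg pw_prob)

lemma set_pn: "set_pmf (pn n) \<subseteq> {..n}"
  by (auto simp: set_pmf_iff pmf_pn pw_def split: if_splits)

definition nu :: "nat \<Rightarrow> real measure" where
  "nu n = distr (measure_pmf (pn n)) borel (\<lambda>k. real k / real n)"

lemma meas_pn: "f \<in> measurable (measure_pmf (pn n)) borel"
proof -
  have "f \<in> measurable (count_space UNIV) borel" by simp
  moreover have "sets (measure_pmf (pn n)) = sets (count_space UNIV)" by simp
  ultimately show ?thesis using measurable_cong_sets by blast
qed

lemma nu_dist: "real_distribution (nu n)"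
proof -
  have "prob_space (nu n)" unfolding nu_def by (rule prob_space.prob_space_distr[OF prob_space_measure_pmf meas_pn])
  moreover have "sets (nu n) = sets borel" by (simp add: nu_def)
  ultimately show ?thesis by (simp add: real_distribution_def real_distribution_axioms_def)
qed

lemma nu_int: assumes g: "g \<in> borel_measurable borel"
  shows "(\<integral>x. g x \<partial>nu n) = (\<Sum>k\<le>n. wt u n k * g (real k / real n))"
proof -
  have "(\<integral>x. g x \<partial>nu n) = (\<integral>k. g (real k / real n) \<partial>measure_pmf (pn n))"
    unfolding nu_def by (rule integral_distr[OF meas_pn g])
  also have "\<dots> = (\<Sum>k\<le>n. g (real k / real n) * pmf (pn n) k)"
    by (rule integral_measure_pmf_real) (use set_pn in auto)
  also have "\<dots> = (\<Sum>k\<le>n. wt u n k * g (real k / real n))"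
    by (rule sum.cong) (auto simp: pmf_pn pw_def)
  finally show ?thesis .
qed

definition clip :: "real \<Rightarrow> real" where "clip x = max 0 (min 1 x)"

lemma clip_cont: "isCont clip x" unfolding clip_def by (intro continuous_intros)

lemma clip_id: "0 \<le> x \<Longrightarrow> x \<le> 1 \<Longrightarrow> clip x = x" by (simp add: clip_def)

definition hsupp :: "real \<Rightarrow> real" where "hsupp x = min 1 (max 0 (- x) + max 0 (x - 1))"

lemma hsupp_cont: "isCont hsupp x" unfolding hsupp_def by (intro continuous_intros)

lemma cont_meas: "(\<And>x. isCont f x) \<Longrightarrow> (f :: real \<Rightarrow> real) \<in> borel_measurable borel"
  by (intro borel_measurable_continuous_onI continuous_at_imp_continuous_on) auto

theorem hausdorff:
  "\<exists>\<nu>. real_distribution \<nu> \<and> emeasure \<nu> {0..1} = 1 \<and> (\<forall>N. (\<integral>x. x ^ N \<partial>\<nu>) = u N)"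
proof -
  define ms where "ms = (\<lambda>n. nu (Suc n))"
  have frac01: "0 \<le> real k / real (Suc n) \<and> real k / real (Suc n) \<le> 1" if "k \<le> Suc n" for k n
    using that by (simp add: field_simps)
  have tight: "tight ms"
    unfolding tight_def
  proof (intro conjI allI impI)
    show "real_distribution (ms n)" for n unfolding ms_def by (rule nu_dist)
    fix e :: real assume "e > 0"
    show "\<exists>a b. a < b \<and> (\<forall>n. 1 - e < measure (ms n) {a<..b})"
    proof -
      have X: "1 - e < measure (ms n) {-1<..1}" for n
      proof -
      interpret real_distribution "ms n" unfolding ms_def by (rule nu_dist)
      have "measure (ms n) {-1<..1} = (\<integral>x. indicator {-1<..1::real} x \<partial>ms n)" by simp
      also have "\<dots> = (\<Sum>k\<le>Suc n. wt u (Suc n) k * indicator {-1<..1::real} (real k / real (Suc n)))"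
        unfolding ms_def by (rule nu_int) simp
      also have "\<dots> = (\<Sum>k\<le>Suc n. wt u (Suc n) k)"
      proof (rule sum.cong)
        fix k assume "k \<in> {..Suc n}"
        then have "0 \<le> real k / real (Suc n)" "real k / real (Suc n) \<le> 1" using frac01[of k n] by auto
        then have "-1 < real k / real (Suc n)" "real k / real (Suc n) \<le> 1" by linarith+
        then show "wt u (Suc n) k * indicator {-1<..1::real} (real k / real (Suc n)) = wt u (Suc n) k"
          by (simp add: indicator_def del: of_nat_Suc)
      qed simp
      also have "\<dots> = 1" by (rule wt_sum)
      finally show "1 - e < measure (ms n) {-1<..1}" using \<open>e > 0\<close> by simp
      qed
      show ?thesis by (rule exI[of _ "-1::real"], rule exI[of _ "1::real"]) (use X in auto)
    qed
  qed
  obtain r M where r: "strict_mono r" and M: "real_distribution M" and wc: "weak_conv_m (ms \<circ> id \<circ> r) M"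
    using tight_imp_convergent_subsubsequence[OF tight, of id] by (auto simp: strict_mono_def)
  interpret M: real_distribution M by (rule M)
  have conv: "(\<lambda>m. \<integral>x. g x \<partial>ms (r m)) \<longlonglongrightarrow> (\<integral>x. g x \<partial>M)"
    if gc: "\<And>x. isCont g x" and gb: "\<And>x. norm (g x) \<le> B" for g :: "real \<Rightarrow> real" and B
  proof -
    have "\<And>n. real_distribution ((ms \<circ> id \<circ> r) n)" unfolding ms_def by (simp add: nu_dist)
    from weak_conv_imp_integral_bdd_continuous_conv[OF this M wc gc gb]
    show ?thesis by simp
  qed
  have sr: "strict_mono (\<lambda>m. Suc (r m))" using r by (simp add: strict_mono_def)
  have mom_eq: "(\<integral>x. clip x ^ N \<partial>M) = u N" for N
  proof -
    have gc: "isCont (\<lambda>x. clip x ^ N) x" for x by (intro continuous_intros clip_cont)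
    have gb: "norm (clip x ^ N) \<le> 1" for x
    proof -
      have "0 \<le> clip x" "clip x \<le> 1" by (auto simp: clip_def)
      then show ?thesis by (simp add: power_le_one)
    qed
    have e: "(\<integral>x. clip x ^ N \<partial>ms (r m)) = mom (Suc (r m)) N" for m
    proof -
      have "(\<integral>x. clip x ^ N \<partial>ms (r m)) = (\<Sum>k\<le>Suc (r m). wt u (Suc (r m)) k * clip (real k / real (Suc (r m))) ^ N)"
        unfolding ms_def by (rule nu_int) (rule cont_meas[OF gc])
      also have "\<dots> = mom (Suc (r m)) N" unfolding mom_def
      proof (rule sum.cong)
        fix k assume "k \<in> {..Suc (r m)}"
        then have "clip (real k / real (Suc (r m))) = real k / real (Suc (r m))"
          using frac01[of k "r m"] by (intro clip_id) auto
        then show "wt u (Suc (r m)) k * clip (real k / real (Suc (r m))) ^ N = wt u (Suc (r m)) k * (real k / real (Suc (r m))) ^ N"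
          by simp
      qed simp
      finally show ?thesis .
    qed
    have "(\<lambda>m. mom (Suc (r m)) N) \<longlonglongrightarrow> u N"
      using LIMSEQ_subseq_LIMSEQ[OF mom_lim sr] by (simp add: comp_def)
    moreover have "(\<lambda>m. mom (Suc (r m)) N) \<longlonglongrightarrow> (\<integral>x. clip x ^ N \<partial>M)"
      using conv[OF gc gb] unfolding e .
    ultimately show ?thesis using LIMSEQ_unique by blast
  qed
  have supp: "AE x in M. x \<in> {0..1}"
  proof -
    have hb: "norm (hsupp x) \<le> 1" for x by (simp add: hsupp_def)
    have e: "(\<integral>x. hsupp x \<partial>ms (r m)) = 0" for m
    proof -
      have "(\<integral>x. hsupp x \<partial>ms (r m)) = (\<Sum>k\<le>Suc (r m). wt u (Suc (r m)) k * hsupp (real k / real (Suc (r m))))"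
        unfolding ms_def by (rule nu_int) (rule cont_meas[OF hsupp_cont])
      also have "\<dots> = 0"
      proof (rule sum.neutral, rule ballI)
        fix k assume "k \<in> {..Suc (r m)}"
        then have "0 \<le> real k / real (Suc (r m))" "real k / real (Suc (r m)) \<le> 1"
          using frac01[of k "r m"] by auto
        then show "wt u (Suc (r m)) k * hsupp (real k / real (Suc (r m))) = 0"
          unfolding hsupp_def by (simp del: of_nat_Suc)
      qed
      finally show ?thesis .
    qed
    have "(\<lambda>m. 0::real) \<longlonglongrightarrow> (\<integral>x. hsupp x \<partial>M)"
      using conv[OF hsupp_cont hb] unfolding e .
    then have i0: "(\<integral>x. hsupp x \<partial>M) = 0" using LIMSEQ_unique tendsto_const by blast
    have int: "integrable M hsupp"
      by (rule M.integrable_const_bound[where B=1]) (use hb cont_meas[OF hsupp_cont] in auto)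
    have nn: "AE x in M. 0 \<le> hsupp x" by (simp add: hsupp_def)
    have "AE x in M. hsupp x = 0"
      using i0 integral_nonneg_eq_0_iff_AE[OF int nn] by simp
    then show ?thesis
      by eventually_elim (auto simp: hsupp_def split: if_splits)
  qed
  have "emeasure M {0..1} = 1" by (rule M.emeasure_eq_1_AE) (use supp in auto)
  moreover have "(\<integral>x. x ^ N \<partial>M) = u N" for N
  proof -
    have "(\<integral>x. x ^ N \<partial>M) = (\<integral>x. clip x ^ N \<partial>M)"
    proof (rule integral_cong_AE)
      have "(\<lambda>x. clip x ^ N) \<in> borel_measurable borel" by (rule cont_meas) (intro continuous_intros clip_cont)
      then show "(\<lambda>x. clip x ^ N) \<in> borel_measurable M" using measurable_cong_sets[OF M.events_eq_borel refl] by blast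
      show "(\<lambda>x. x ^ N) \<in> borel_measurable M" by simp
      show "AE x in M. x ^ N = clip x ^ N" using supp by eventually_elim (simp add: clip_id)
    qed
    then show ?thesis using mom_eq by simp
  qed
  ultimately show ?thesis using M by blast
qed

end

lemma norm_int_le:
  fixes f :: "real \<Rightarrow> complex"
  assumes "prob_space M" "integrable M f" "\<And>x. norm (f x) \<le> C"
  shows "norm (integral\<^sup>L M f) \<le> C"
proof -
  interpret prob_space M by fact
  have "norm (integral\<^sup>L M f) \<le> (\<integral>x. norm (f x) \<partial>M)" by (rule integral_norm_bound)
  also have "\<dots> \<le> C" by (rule integral_le_const) (use assms in auto)
  finally show ?thesis .
qed

lemma int_bdd:
  fixes g :: "real \<Rightarrow> complex"
  assumes "prob_space M" "sets M = sets borel" "g \<in> borel_measurable borel" "\<And>x. norm (g x) \<le> B"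
  shows "integrable M g"
proof -
  interpret prob_space M by fact
  show ?thesis
  proof (rule integrable_const_bound[where B=B])
    show "g \<in> borel_measurable M" using assms(3) measurable_cong_sets[OF assms(2) refl] by blast
  qed (use assms in auto)
qed

lemma dist_Im: "norm (complex_of_real x - y) \<ge> \<bar>Im y\<bar>"
proof -
  have "\<bar>Im (complex_of_real x - y)\<bar> \<le> norm (complex_of_real x - y)" by (rule abs_Im_le_cmod)
  then show ?thesis by simp
qed

lemma ne_Im: "Im y \<noteq> 0 \<Longrightarrow> complex_of_real x - y \<noteq> 0"
  using dist_Im[of y x] by auto

lemma meas_inv: "(\<lambda>x. 1 / (complex_of_real x - y)) \<in> borel_measurable borel"
  by measurable

lemma meas_inv2: "(\<lambda>x. 1 / ((complex_of_real x - y) * (complex_of_real x - z))) \<in> borel_measurable borel"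
  by measurable

lemma bound_inv: "Im y \<noteq> 0 \<Longrightarrow> norm (1 / (complex_of_real x - y)) \<le> 1 / \<bar>Im y\<bar>"
  using dist_Im[of y x] by (simp add: norm_divide divide_simps)

lemma bound_inv2: "Im y \<noteq> 0 \<Longrightarrow> Im z \<noteq> 0 \<Longrightarrow>
   norm (1 / ((complex_of_real x - y) * (complex_of_real x - z))) \<le> 1 / (\<bar>Im y\<bar> * \<bar>Im z\<bar>)"
proof -
  assume "Im y \<noteq> 0" "Im z \<noteq> 0"
  then have "\<bar>Im y\<bar> * \<bar>Im z\<bar> \<le> norm (complex_of_real x - y) * norm (complex_of_real x - z)"
    by (intro mult_mono dist_Im) auto
  moreover have "\<bar>Im y\<bar> * \<bar>Im z\<bar> > 0" using \<open>Im y \<noteq> 0\<close> \<open>Im z \<noteq> 0\<close> by simp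
  ultimately show ?thesis by (simp add: norm_divide norm_mult frac_le)
qed

lemma alg2: "(a::complex) \<noteq> 0 \<Longrightarrow> b \<noteq> 0 \<Longrightarrow> 1/(a*b) - 1/(b*b) = (b - a) * (1/(a*b)) * (1/b)"
  by (simp add: field_simps)

lemma stieltjes_deriv:
  assumes P: "prob_space M" and S: "sets M = sets borel" and z: "Im z \<noteq> 0"
  shows "(stieltjes M has_field_derivative (\<integral>x. 1 / ((complex_of_real x - z) * (complex_of_real x - z)) \<partial>M)) (at z)"
proof -
  define d where "d = \<bar>Im z\<bar>"
  have d: "d > 0" using z by (simp add: d_def)
  define D where "D = (\<integral>x. 1 / ((complex_of_real x - z) * (complex_of_real x - z)) \<partial>M)"
  have intinv: "integrable M (\<lambda>x. 1 / (complex_of_real x - y))" if "Im y \<noteq> 0" for y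
    by (rule int_bdd[OF P S meas_inv bound_inv[OF that]])
  have intinv2: "integrable M (\<lambda>x. 1 / ((complex_of_real x - y) * (complex_of_real x - w)))"
    if "Im y \<noteq> 0" "Im w \<noteq> 0" for y w
    by (rule int_bdd[OF P S meas_inv2 bound_inv2[OF that]])
  have "((\<lambda>y. (stieltjes M y - stieltjes M z) / (y - z)) \<longlongrightarrow> D) (at z)"
    unfolding LIM_eq
  proof (intro allI impI)
    fix r :: real assume r: "r > 0"
    define s where "s = min (d/2) (r * d^3 / 4)"
    have s: "s > 0" using r d by (simp add: s_def)
    show "\<exists>s>0. \<forall>y. y \<noteq> z \<and> norm (y - z) < s \<longrightarrow> norm ((stieltjes M y - stieltjes M z) / (y - z) - D) < r"
    proof (intro exI[of _ s] conjI allI impI s)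
      fix y assume y: "y \<noteq> z \<and> norm (y - z) < s"
      have "\<bar>Im y - Im z\<bar> \<le> norm (y - z)" using abs_Im_le_cmod[of "y - z"] by simp
      then have dy: "\<bar>Im y\<bar> \<ge> d/2" using y unfolding d_def s_def by linarith
      then have yI: "Im y \<noteq> 0" using d by auto
      have yz: "y - z \<noteq> 0" using y by simp
      have pw: "1 / (complex_of_real x - y) - 1 / (complex_of_real x - z) =
          (y - z) * (1 / ((complex_of_real x - y) * (complex_of_real x - z)))" for x
        using ne_Im[OF yI, of x] ne_Im[OF z, of x] by (simp add: field_simps)
      have "stieltjes M y - stieltjes M z = (\<integral>x. (y - z) * (1 / ((complex_of_real x - y) * (complex_of_real x - z))) \<partial>M)"
        unfolding stieltjes_def pw[symmetric] by (rule Bochner_Integration.integral_diff[symmetric]) (use intinv yI z in auto)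
      also have "\<dots> = (y - z) * (\<integral>x. 1 / ((complex_of_real x - y) * (complex_of_real x - z)) \<partial>M)"
        by (rule integral_mult_right_zero)
      finally have q: "(stieltjes M y - stieltjes M z) / (y - z) = (\<integral>x. 1 / ((complex_of_real x - y) * (complex_of_real x - z)) \<partial>M)"
        using yz by simp
      have pw2: "1 / ((complex_of_real x - y) * (complex_of_real x - z)) - 1 / ((complex_of_real x - z) * (complex_of_real x - z))
         = (y - z) * (1 / ((complex_of_real x - y) * (complex_of_real x - z))) * (1 / (complex_of_real x - z))" for x
        using alg2[OF ne_Im[OF yI, of x] ne_Im[OF z, of x]] by simp
      have "(stieltjes M y - stieltjes M z) / (y - z) - D =
          (\<integral>x. (y - z) * (1 / ((complex_of_real x - y) * (complex_of_real x - z))) * (1 / (complex_of_real x - z)) \<partial>M)"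
        unfolding q D_def pw2[symmetric] by (rule Bochner_Integration.integral_diff[symmetric]) (use intinv2 yI z in auto)
      also have "norm \<dots> \<le> norm (y - z) * (1 / (\<bar>Im y\<bar> * d)) * (1 / d)"
      proof -
        have bnd: "norm ((y - z) * (1 / ((complex_of_real x - y) * (complex_of_real x - z))) * (1 / (complex_of_real x - z)))
            \<le> norm (y - z) * (1 / (\<bar>Im y\<bar> * d)) * (1 / d)" for x
          unfolding norm_mult using bound_inv2[OF yI z, of x] bound_inv[OF z, of x]
          by (intro mult_mono) (auto simp: d_def)
        have "integrable M (\<lambda>x. (y - z) * (1 / ((complex_of_real x - y) * (complex_of_real x - z))) * (1 / (complex_of_real x - z)))"
          by (rule int_bdd[OF P S _ bnd]) measurable
        then show ?thesis by (rule norm_int_le[OF P _ bnd])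
      qed
      also have "\<dots> \<le> s * (2 / d^2) * (1/d)"
      proof -
        have "1 / (\<bar>Im y\<bar> * d) \<le> 2 / d^2" using dy d by (simp add: field_simps power2_eq_square)
        then show ?thesis using y d s by (intro mult_mono) (auto simp: less_imp_le)
      qed
      also have "\<dots> \<le> (r * d^3 / 4) * (2 / d^2) * (1/d)"
        using d by (intro mult_right_mono) (auto simp: s_def)
      also have "\<dots> = r / 2" using d by (simp add: field_simps power3_eq_cube power2_eq_square)
      also have "\<dots> < r" using r by simp
      finally show "norm ((stieltjes M y - stieltjes M z) / (y - z) - D) < r" .
    qed
  qed
  then show ?thesis unfolding D_def by (simp add: has_field_derivative_iff)
qed

lemma stieltjes_holo:
  assumes "prob_space M" "sets M = sets borel"
  shows "stieltjes M holomorphic_on {z. Im z \<noteq> 0}"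
  unfolding holomorphic_on_def field_differentiable_def
  using stieltjes_deriv[OF assms] has_field_derivative_at_within by blast

lemma sum_int_geom:
  fixes f :: "nat \<Rightarrow> real \<Rightarrow> complex"
  assumes P: "prob_space M" and S: "sets M = sets borel" and AE01: "AE x in M. x \<in> {0..1}"
    and meas: "\<And>n. f n \<in> borel_measurable borel"
    and bnd: "\<And>n x. x \<in> {0..1} \<Longrightarrow> norm (f n x) \<le> C * q ^ n"
    and q: "0 \<le> q" "q < 1"
  shows "(\<lambda>n. integral\<^sup>L M (f n)) sums (\<integral>x. (\<Sum>n. f n x) \<partial>M)"
    and "integrable M (\<lambda>x. \<Sum>n. f n x)"
proof -
  interpret prob_space M by (rule P)
  have measM: "f n \<in> borel_measurable M" for n using meas measurable_cong_sets[OF S refl] by blast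
  have AEb: "AE x in M. norm (f n x) \<le> C * q ^ n" for n using AE01 by eventually_elim (rule bnd)
  have int: "integrable M (f n)" for n
    by (rule integrable_const_bound[OF AEb measM])
  have sg: "summable (\<lambda>n. C * q ^ n)" using q by (intro summable_mult summable_geometric) auto
  have AEs: "AE x in M. summable (\<lambda>n. norm (f n x))"
    using AE01 by eventually_elim (rule summable_comparison_test'[OF sg], use bnd in auto)
  have ib: "(\<integral>x. norm (f n x) \<partial>M) \<le> C * q ^ n" for n
    by (rule integral_le_const) (use int AEb in auto)
  have si: "summable (\<lambda>n. \<integral>x. norm (f n x) \<partial>M)"
    by (rule summable_comparison_test'[OF sg]) (use ib in auto)
  show "(\<lambda>n. integral\<^sup>L M (f n)) sums (\<integral>x. (\<Sum>n. f n x) \<partial>M)"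
    by (rule sums_integral[OF int AEs si])
  show "integrable M (\<lambda>x. \<Sum>n. f n x)"
    by (rule integrable_suminf[OF int AEs si])
qed

lemma nu_series:
  assumes P: "prob_space M" and S: "sets M = sets borel" and AE01: "AE x in M. x \<in> {0..1}"
    and z: "norm z > 1"
  shows "(\<lambda>N. - complex_of_real (\<integral>x. x ^ N \<partial>M) / z ^ Suc N) sums stieltjes M z"
proof -
  interpret prob_space M by (rule P)
  define f where "f = (\<lambda>(N::nat) (x::real). - (complex_of_real x ^ N) / z ^ Suc N)"
  have z0: "z \<noteq> 0" using z by auto
  have meas: "f n \<in> borel_measurable borel" for n unfolding f_def by measurable
  have bnd: "norm (f n x) \<le> (1 / norm z) * (1 / norm z) ^ n" if "x \<in> {0..1}" for n x
  proof -
    have "norm (f n x) = \<bar>x\<bar> ^ n / norm z ^ Suc n" by (simp add: f_def norm_divide norm_power norm_mult)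
    also have "\<dots> \<le> 1 / norm z ^ Suc n"
      using that z by (intro divide_right_mono power_le_one) auto
    also have "\<dots> = (1 / norm z) * (1 / norm z) ^ n" by (simp add: power_one_over)
    finally show ?thesis .
  qed
  have q: "0 \<le> 1 / norm z" "1 / norm z < 1" using z by (auto simp: divide_less_eq)
  note R = sum_int_geom[OF P S AE01 meas bnd q]
  have e1: "integral\<^sup>L M (f N) = - complex_of_real (\<integral>x. x ^ N \<partial>M) / z ^ Suc N" for N
    by (simp add: f_def flip: of_real_power)
  have e2: "(\<integral>x. (\<Sum>n. f n x) \<partial>M) = stieltjes M z"
    unfolding stieltjes_def
  proof (rule integral_cong_AE)
    show "(\<lambda>x. \<Sum>n. f n x) \<in> borel_measurable M" using R(2) by (rule borel_measurable_integrable)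
    show "(\<lambda>x. 1 / (complex_of_real x - z)) \<in> borel_measurable M"
      using meas_inv measurable_cong_sets[OF S refl] by blast
    show "AE x in M. (\<Sum>n. f n x) = 1 / (complex_of_real x - z)"
      using AE01
    proof eventually_elim
      case (elim x)
      have nx: "norm (complex_of_real x / z) < 1" using elim z by (simp add: norm_divide divide_less_eq)
      have "(\<lambda>n. (complex_of_real x / z) ^ n) sums (1 / (1 - complex_of_real x / z))"
        by (rule geometric_sums[OF nx])
      then have "(\<lambda>n. - (1/z) * (complex_of_real x / z) ^ n) sums (- (1/z) * (1 / (1 - complex_of_real x / z)))"
        by (rule sums_mult)
      moreover have "(\<lambda>n. - (1/z) * (complex_of_real x / z) ^ n) = (\<lambda>n. f n x)"
        by (simp add: f_def fun_eq_iff power_divide field_simps)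
      moreover have "- (1/z) * (1 / (1 - complex_of_real x / z)) = 1 / (complex_of_real x - z)"
      proof -
        have "complex_of_real x \<noteq> z" using elim z by auto
        then show ?thesis using z0 by (simp add: field_simps)
      qed
      ultimately show ?case by (simp add: sums_iff)
    qed
  qed
  show ?thesis using R(1) unfolding e1 e2 .
qed

lemma norm_1_minus_of_real: "norm (1 - complex_of_real x) = \<bar>1 - x\<bar>"
  by (metis norm_of_real of_real_1 of_real_diff)

lemma mu_series:
  assumes P: "prob_space M" and S: "sets M = sets borel" and AE01: "AE x in M. x \<in> {0..1}"
    and z: "norm z > 1" "Im z > 0"
  shows "(\<lambda>j. complex_of_real (\<integral>x. (1 - x) ^ j * x \<partial>M) * (1/z) ^ Suc j) sums (1 - (z - 1) * stieltjes M (1 - z))"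
proof -
  interpret prob_space M by (rule P)
  define w where "w = 1 / z"
  have z0: "z \<noteq> 0" using z by auto
  have nw: "norm w < 1" using z by (simp add: w_def norm_divide divide_less_eq)
  define f where "f = (\<lambda>(j::nat) (x::real). complex_of_real ((1 - x) ^ j * x) * w ^ Suc j)"
  have meas: "f n \<in> borel_measurable borel" for n unfolding f_def by measurable
  have bnd: "norm (f n x) \<le> norm w * norm w ^ n" if "x \<in> {0..1}" for n x
  proof -
    have "norm (f n x) = (\<bar>1 - x\<bar> ^ n * \<bar>x\<bar>) * norm w ^ Suc n" by (simp add: f_def norm_mult norm_power abs_mult power_abs norm_1_minus_of_real)
    also have "\<dots> \<le> 1 * norm w ^ Suc n"
      using that by (intro mult_right_mono mult_le_one power_le_one) auto
    finally show ?thesis by simp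
  qed
  have q: "0 \<le> norm w" "norm w < 1" using nw by auto
  note R = sum_int_geom[OF P S AE01 meas bnd q]
  have e1: "integral\<^sup>L M (f j) = complex_of_real (\<integral>x. (1 - x) ^ j * x \<partial>M) * (1/z) ^ Suc j" for j
    unfolding f_def w_def by (simp only: integral_mult_left_zero integral_complex_of_real)
  have I1: "integrable M (\<lambda>x. 1 / (complex_of_real x - (1 - z)))"
    by (rule int_bdd[OF P S meas_inv bound_inv]) (use z in simp)
  have e2: "(\<integral>x. (\<Sum>n. f n x) \<partial>M) = (\<integral>x. 1 - (z - 1) * (1 / (complex_of_real x - (1 - z))) \<partial>M)"
  proof (rule integral_cong_AE)
    show "(\<lambda>x. \<Sum>n. f n x) \<in> borel_measurable M" using R(2) by (rule borel_measurable_integrable)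
    have "(\<lambda>x. 1 - (z - 1) * (1 / (complex_of_real x - (1 - z)))) \<in> borel_measurable borel" by measurable
    then show "(\<lambda>x. 1 - (z - 1) * (1 / (complex_of_real x - (1 - z)))) \<in> borel_measurable M"
      using measurable_cong_sets[OF S refl] by blast
    show "AE x in M. (\<Sum>n. f n x) = 1 - (z - 1) * (1 / (complex_of_real x - (1 - z)))"
      using AE01
    proof eventually_elim
      case (elim x)
      have nx: "norm (complex_of_real (1 - x) * w) < 1"
      proof -
        have "norm (complex_of_real (1 - x) * w) = \<bar>1 - x\<bar> * norm w" by (simp add: norm_mult norm_1_minus_of_real)
        also have "\<dots> \<le> 1 * norm w" using elim by (intro mult_right_mono) auto
        finally show ?thesis using nw by simp
      qed
      have "(\<lambda>n. (complex_of_real (1 - x) * w) ^ n) sums (1 / (1 - complex_of_real (1 - x) * w))"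
        by (rule geometric_sums[OF nx])
      then have "(\<lambda>n. (complex_of_real x * w) * (complex_of_real (1 - x) * w) ^ n) sums ((complex_of_real x * w) * (1 / (1 - complex_of_real (1 - x) * w)))"
        by (rule sums_mult)
      moreover have "(\<lambda>n. (complex_of_real x * w) * (complex_of_real (1 - x) * w) ^ n) = (\<lambda>n. f n x)"
        by (simp add: f_def fun_eq_iff power_mult_distrib mult_ac)
      moreover have "(complex_of_real x * w) * (1 / (1 - complex_of_real (1 - x) * w)) = 1 - (z - 1) * (1 / (complex_of_real x - (1 - z)))"
      proof -
        have a: "complex_of_real x - (1 - z) \<noteq> 0" using ne_Im[of "1 - z" x] z by simp
        have b: "z - complex_of_real (1 - x) \<noteq> 0" using a by (simp add: algebra_simps)
        have "(complex_of_real x * w) * (1 / (1 - complex_of_real (1 - x) * w)) = complex_of_real x / (z - complex_of_real (1 - x))"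
          using z0 b by (simp add: w_def field_simps)
        also have "\<dots> = 1 - (z - 1) * (1 / (complex_of_real x - (1 - z)))"
          using a b by (simp add: field_simps)
        finally show ?thesis .
      qed
      ultimately show ?case by (simp add: sums_iff)
    qed
  qed
  also have "\<dots> = (\<integral>x. 1 \<partial>M) - (\<integral>x. (z - 1) * (1 / (complex_of_real x - (1 - z))) \<partial>M)"
  proof (rule Bochner_Integration.integral_diff)
    show "integrable M (\<lambda>x. (z - 1) * (1 / (complex_of_real x - (1 - z))))"
      by (rule integrable_mult_right[OF I1])
  qed simp
  also have "\<dots> = 1 - (z - 1) * stieltjes M (1 - z)"
  proof -
    have "(\<integral>x. (1::complex) \<partial>M) = 1" using prob_space by simp
    then show ?thesis unfolding stieltjes_def integral_mult_right_zero by simp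
  qed
  finally have e2': "(\<integral>x. (\<Sum>n. f n x) \<partial>M) = 1 - (z - 1) * stieltjes M (1 - z)" .
  show ?thesis using R(1) unfolding e1 e2' .
qed

lemma gen_identity:
  fixes u Kq :: "nat \<Rightarrow> real" and w :: complex
  assumes ub: "\<And>N. \<bar>u N\<bar> \<le> 1" and Kb: "\<And>k. \<bar>Kq k\<bar> \<le> 1" and u0: "u 0 = 1"
    and rec: "\<And>M. u (Suc M) = (\<Sum>j\<le>M. u j * Kq (Suc M - j))" and nw: "norm w < 1"
  shows "(\<Sum>N. complex_of_real (u N) * w ^ N) * (1 - (\<Sum>j. complex_of_real (Kq (Suc j)) * w ^ Suc j)) = 1"
proof -
  define a where "a = (\<lambda>N. complex_of_real (u N) * w ^ N)"
  define b where "b = (\<lambda>k. if k = 0 then 0 else complex_of_real (Kq k) * w ^ k)"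
  have sg: "summable (\<lambda>n. norm w ^ n)" using nw by (intro summable_geometric) auto
  have sa: "summable (\<lambda>k. norm (a k))"
    by (rule summable_comparison_test'[OF sg]) (auto simp: a_def norm_mult norm_power intro!: mult_left_le_one_le ub)
  have sb: "summable (\<lambda>k. norm (b k))"
    by (rule summable_comparison_test'[OF sg]) (auto simp: b_def norm_mult norm_power intro!: mult_left_le_one_le Kb)
  have CP: "(\<lambda>k. \<Sum>i\<le>k. a i * b (k - i)) sums ((\<Sum>k. a k) * (\<Sum>k. b k))"
    by (rule Cauchy_product_sums[OF sa sb])
  have c: "(\<Sum>i\<le>k. a i * b (k - i)) = (if k = 0 then 0 else a k)" for k
  proof (cases k)
    case 0 then show ?thesis by (simp add: b_def)
  next
    case (Suc M)
    have "(\<Sum>i\<le>Suc M. a i * b (Suc M - i)) = (\<Sum>i\<le>M. a i * b (Suc M - i))"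
      by (simp add: b_def)
    also have "\<dots> = (\<Sum>i\<le>M. w ^ Suc M * complex_of_real (u i * Kq (Suc M - i)))"
    proof (rule sum.cong)
      fix i assume "i \<in> {..M}"
      then have "w ^ i * w ^ (Suc M - i) = w ^ Suc M" by (simp add: power_add[symmetric])
      then show "a i * b (Suc M - i) = w ^ Suc M * complex_of_real (u i * Kq (Suc M - i))"
        using \<open>i \<in> {..M}\<close> by (auto simp: a_def b_def algebra_simps)
    qed simp
    also have "\<dots> = w ^ Suc M * complex_of_real (u (Suc M))"
      by (simp add: rec sum_distrib_left[symmetric] del: of_real_mult)
    finally show ?thesis using Suc by (simp add: a_def mult.commute)
  qed
  have sA: "a sums (\<Sum>k. a k)" using summable_norm_cancel[OF sa] by (rule summable_sums)
  have "(\<lambda>k. a k - (if k = 0 then 1 else 0)) sums ((\<Sum>k. a k) - 1)"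
    by (rule sums_diff[OF sA]) (use sums_single[of 0 "\<lambda>_. 1::complex"] in simp)
  moreover have "(\<lambda>k. a k - (if k = 0 then 1 else 0)) = (\<lambda>k. \<Sum>i\<le>k. a i * b (k - i))"
    unfolding c by (auto simp: fun_eq_iff a_def u0)
  ultimately have e1: "(\<Sum>k. a k) * (\<Sum>k. b k) = (\<Sum>k. a k) - 1"
    using CP sums_unique2 by metis
  have sB: "b sums (\<Sum>k. b k)" using summable_norm_cancel[OF sb] by (rule summable_sums)
  then have "(\<lambda>j. b (Suc j)) sums (\<Sum>k. b k)" by (subst sums_Suc_iff) (simp add: b_def)
  then have e2: "(\<Sum>j. complex_of_real (Kq (Suc j)) * w ^ Suc j) = (\<Sum>k. b k)"
    by (simp add: b_def sums_iff)
  show ?thesis unfolding e2 a_def[symmetric] using e1 by (simp add: algebra_simps)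
qed

theorem stieltjes_identity:
  assumes Pn: "prob_space \<nu>" and Sn: "sets \<nu> = sets borel" and An: "AE x in \<nu>. x \<in> {0..1}"
    and Pm: "prob_space \<mu>" and Sm: "sets \<mu> = sets borel" and Am: "AE x in \<mu>. x \<in> {0..1}"
    and rec: "\<And>M. (\<integral>x. x ^ Suc M \<partial>\<nu>) = (\<Sum>j\<le>M. (\<integral>x. x ^ j \<partial>\<nu>) * (\<integral>x. (1 - x) ^ (Suc M - j - 1) * x \<partial>\<mu>))"
    and z: "Im z > 0"
  shows "stieltjes \<nu> z * stieltjes \<mu> (1 - z) = 1 / (z * (1 - z))"
proof -
  interpret n: prob_space \<nu> by (rule Pn)
  interpret m: prob_space \<mu> by (rule Pm)
  define u where "u N = (\<integral>x. x ^ N \<partial>\<nu>)" for N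
  define Kq where "Kq k = (\<integral>x. (1 - x) ^ (k - 1) * x \<partial>\<mu>)" for k
  have ub: "\<bar>u N\<bar> \<le> 1" for N
  proof -
    have "\<bar>u N\<bar> \<le> (\<integral>x. \<bar>x ^ N\<bar> \<partial>\<nu>)" unfolding u_def by (rule integral_abs_bound)
    also have "\<dots> \<le> 1"
    proof (rule n.integral_le_const)
      show ab: "AE x in \<nu>. \<bar>x ^ N\<bar> \<le> 1" using An by eventually_elim (auto simp: power_le_one)
      have "(\<lambda>x. \<bar>x ^ N\<bar>) \<in> borel_measurable \<nu>" by (simp add: measurable_cong_sets[OF Sn refl])
      then show "integrable \<nu> (\<lambda>x. \<bar>x ^ N\<bar>)"
        by (rule n.integrable_const_bound[where B=1, rotated]) (use ab in simp)
    qed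
    finally show ?thesis .
  qed
  have Kb: "\<bar>Kq k\<bar> \<le> 1" for k
  proof -
    have "\<bar>Kq k\<bar> \<le> (\<integral>x. \<bar>(1 - x) ^ (k - 1) * x\<bar> \<partial>\<mu>)" unfolding Kq_def by (rule integral_abs_bound)
    also have "\<dots> \<le> 1"
    proof (rule m.integral_le_const)
      have b: "\<bar>(1 - x) ^ (k - 1) * x\<bar> \<le> 1" if "x \<in> {0..1}" for x :: real
      proof -
        have x: "0 \<le> 1 - x" "1 - x \<le> 1" using that by auto
        have "0 \<le> (1 - x) ^ (k - 1)" "(1 - x) ^ (k - 1) \<le> 1"
          using zero_le_power[OF x(1)] power_le_one[OF x] by blast+
        then have "0 \<le> (1 - x) ^ (k - 1) * x" "(1 - x) ^ (k - 1) * x \<le> 1"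
          using that by (auto intro: mult_le_one)
        then show ?thesis by simp
      qed
      show ab: "AE x in \<mu>. \<bar>(1 - x) ^ (k - 1) * x\<bar> \<le> 1" using Am by eventually_elim (rule b)
      have "(\<lambda>x. \<bar>(1 - x) ^ (k - 1) * x\<bar>) \<in> borel_measurable \<mu>" by (simp add: measurable_cong_sets[OF Sm refl])
      then show "integrable \<mu> (\<lambda>x. \<bar>(1 - x) ^ (k - 1) * x\<bar>)"
        by (rule m.integrable_const_bound[where B=1, rotated]) (use ab in simp)
    qed
    finally show ?thesis .
  qed
  have u0: "u 0 = 1" by (simp add: u_def n.prob_space)
  have urec: "u (Suc M) = (\<Sum>j\<le>M. u j * Kq (Suc M - j))" for M
    unfolding u_def Kq_def rec by simp
  define H where "H = {z. Im z > 0}"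
  define G where "G = {z. Im z > 0 \<and> norm z > 1}"
  have big: "stieltjes \<nu> z * stieltjes \<mu> (1 - z) = 1 / (z * (1 - z))" if zG: "z \<in> G" for z
  proof -
    have z1: "norm z > 1" "Im z > 0" using zG by (auto simp: G_def)
    have z0: "z \<noteq> 0" "z \<noteq> 1" using z1 by auto
    define w where "w = 1 / z"
    have nw: "norm w < 1" using z1 by (simp add: w_def norm_divide divide_less_eq)
    have S1: "(\<lambda>N. - complex_of_real (u N) / z ^ Suc N) sums stieltjes \<nu> z"
      unfolding u_def by (rule nu_series[OF Pn Sn An z1(1)])
    have "(\<lambda>N. - w * (complex_of_real (u N) * w ^ N)) = (\<lambda>N. - complex_of_real (u N) / z ^ Suc N)"
      by (simp add: w_def fun_eq_iff power_one_over field_simps)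
    moreover have "(\<lambda>N. - w * (complex_of_real (u N) * w ^ N)) sums (- w * (\<Sum>N. complex_of_real (u N) * w ^ N))"
    proof (rule sums_mult)
      have "summable (\<lambda>N. complex_of_real (u N) * w ^ N)"
        by (rule summable_comparison_test'[of "\<lambda>n. norm w ^ n"]) (use nw ub in \<open>auto simp: norm_mult norm_power intro!: summable_geometric mult_left_le_one_le\<close>)
      then show "(\<lambda>N. complex_of_real (u N) * w ^ N) sums (\<Sum>N. complex_of_real (u N) * w ^ N)"
        by (rule summable_sums)
    qed
    ultimately have sn: "stieltjes \<nu> z = - w * (\<Sum>N. complex_of_real (u N) * w ^ N)"
      using S1 sums_unique2 by metis
    have S2: "(\<lambda>j. complex_of_real (Kq (Suc j)) * w ^ Suc j) sums (1 - (z - 1) * stieltjes \<mu> (1 - z))"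
      unfolding Kq_def w_def using mu_series[OF Pm Sm Am z1] by simp
    then have sm: "(z - 1) * stieltjes \<mu> (1 - z) = 1 - (\<Sum>j. complex_of_real (Kq (Suc j)) * w ^ Suc j)"
      by (simp add: sums_iff)
    have GI: "(\<Sum>N. complex_of_real (u N) * w ^ N) * (1 - (\<Sum>j. complex_of_real (Kq (Suc j)) * w ^ Suc j)) = 1"
      by (rule gen_identity[OF ub Kb u0 urec nw])
    have "stieltjes \<nu> z * ((z - 1) * stieltjes \<mu> (1 - z)) = - w"
      unfolding sn sm using GI by (simp add: mult.assoc)
    then have "stieltjes \<nu> z * stieltjes \<mu> (1 - z) = - w / (z - 1)"
      using z0 by (simp add: field_simps)
    also have "\<dots> = 1 / (z * (1 - z))" using z0 by (simp add: w_def field_simps)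
    finally show ?thesis .
  qed
  have hol1: "stieltjes \<nu> holomorphic_on H"
    by (rule holomorphic_on_subset[OF stieltjes_holo[OF Pn Sn]]) (auto simp: H_def)
  have hol2: "(\<lambda>z. stieltjes \<mu> (1 - z)) holomorphic_on H"
  proof -
    have "(stieltjes \<mu> \<circ> (\<lambda>z. 1 - z)) holomorphic_on H"
      by (rule holomorphic_on_compose) (auto intro!: holomorphic_intros holomorphic_on_subset[OF stieltjes_holo[OF Pm Sm]] simp: H_def)
    then show ?thesis by (simp add: comp_def)
  qed
  have hol3: "(\<lambda>z. 1 / (z * (1 - z))) holomorphic_on H"
    by (intro holomorphic_intros) (auto simp: H_def)
  show ?thesis
  proof (rule analytic_continuation_open[where f="\<lambda>z. stieltjes \<nu> z * stieltjes \<mu> (1 - z)" and g="\<lambda>z. 1 / (z * (1 - z))" and s=G and s'=H])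
    show "open G" unfolding G_def
      by (intro open_Collect_conj open_halfspace_Im_gt) (simp add: open_Collect_less continuous_on_norm continuous_on_const continuous_on_id)
    show "open H" unfolding H_def by (rule open_halfspace_Im_gt)
    show "G \<noteq> {}" unfolding G_def by (rule ex_in_conv[THEN iffD1], rule exI[of _ "2 * \<i>"]) simp
    show "connected H" unfolding H_def by (rule connected_halfspace_Im_gt)
    show "G \<subseteq> H" by (auto simp: G_def H_def)
    show "(\<lambda>z. stieltjes \<nu> z * stieltjes \<mu> (1 - z)) holomorphic_on H"
      by (intro holomorphic_on_mult hol1 hol2)
    show "(\<lambda>z. 1 / (z * (1 - z))) holomorphic_on H" by (rule hol3)
    show "z \<in> H" using z by (simp add: H_def)
  qed (rule big)
qed

theorem theorem1:
  fixes \<mu> :: "real measure" and K :: "enat pmf"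
  assumes mu_prob: "prob_space \<mu>"
    and mu_sets: "sets \<mu> = sets borel"
    and mu_supp: "emeasure \<mu> {0..1} = 1"
    and K_zero: "pmf K 0 = 0"
    and K_fin: "\<And>n::nat. n \<ge> 1 \<Longrightarrow>
        pmf K (enat n) = integral\<^sup>L \<mu> (\<lambda>x. (1 - x) ^ (n - 1) * x)"
    and K_inf: "pmf K \<infinity> = measure \<mu> {0}"
  shows "\<exists>\<nu> :: real measure. prob_space \<nu> \<and> sets \<nu> = sets borel \<and> emeasure \<nu> {0..1} = 1
     \<and> (\<forall>z. Im z > 0 \<longrightarrow> stieltjes \<nu> z * stieltjes \<mu> (1 - z) = 1 / (z * (1 - z)))
     \<and> (\<forall>N::nat. renewal_prob K N = integral\<^sup>L \<nu> (\<lambda>x. x ^ N))"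
proof -
  interpret mp: prob_space \<mu> by (rule mu_prob)
  have AEm: "AE x in \<mu>. x \<in> {0..1}"
  proof -
    have "measure \<mu> {0..1} = 1" using mu_supp by (simp add: mp.emeasure_eq_measure)
    then show ?thesis using mp.prob_eq_1[of "{0..1}"] mu_sets by simp
  qed
  interpret pm \<mu> using mu_prob mu_sets AEm by (rule pm.intro)
  have Kp_K: "Kp k = pmf K (enat k)" if "k \<ge> 1" for k
    using Kp_eq[OF that] K_fin[OF that] by simp
  have ren: "renewal_prob K N = cseq N" for N
  proof (induction N rule: less_induct)
    case (less N)
    show ?case
    proof (cases N)
      case 0 then show ?thesis by (simp add: u0 cseq0)
    next
      case (Suc M)
      have "renewal_prob K N = (\<Sum>k=1..Suc M. pmf K (enat k) * renewal_prob K (Suc M - k))"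
        unfolding Suc by (rule urec[OF K_zero])
      also have "\<dots> = (\<Sum>j\<le>M. cseq j * Kp (Suc M - j))"
      proof -
        have IH: "renewal_prob K j = cseq j" if "j \<le> M" for j using less that Suc by auto
        show ?thesis
          by (rule sum.reindex_bij_witness[of _ "\<lambda>j. Suc M - j" "\<lambda>k. Suc M - k"])
             (auto simp: IH Kp_K mult.commute)
      qed
      also have "\<dots> = cseq N" using cseq_rec[of M] Suc by simp
      finally show ?thesis .
    qed
  qed
  interpret cmseq "renewal_prob K"
    by unfold_locales (simp add: u0, simp add: ren[abs_def] cseq_cm)
  obtain \<nu> where nu: "real_distribution \<nu>" "emeasure \<nu> {0..1} = 1" "\<And>N. (\<integral>x. x ^ N \<partial>\<nu>) = renewal_prob K N"
    using hausdorff by blast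
  interpret np: real_distribution \<nu> by (rule nu(1))
  have AEn: "AE x in \<nu>. x \<in> {0..1}"
  proof -
    have "measure \<nu> {0..1} = 1" using nu(2) by (simp add: np.emeasure_eq_measure)
    then show ?thesis using np.prob_eq_1[of "{0..1}"] by simp
  qed
  have rec: "(\<integral>x. x ^ Suc M \<partial>\<nu>) = (\<Sum>j\<le>M. (\<integral>x. x ^ j \<partial>\<nu>) * (\<integral>x. (1 - x) ^ (Suc M - j - 1) * x \<partial>\<mu>))" for M
  proof -
    have "(\<integral>x. x ^ Suc M \<partial>\<nu>) = (\<Sum>j\<le>M. cseq j * Kp (Suc M - j))" by (simp only: nu(3) ren cseq_rec)
    also have "\<dots> = (\<Sum>j\<le>M. (\<integral>x. x ^ j \<partial>\<nu>) * (\<integral>x. (1 - x) ^ (Suc M - j - 1) * x \<partial>\<mu>))"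
      by (rule sum.cong) (auto simp: nu(3) ren Kp_eq)
    finally show ?thesis .
  qed
  have st: "\<forall>z. Im z > 0 \<longrightarrow> stieltjes \<nu> z * stieltjes \<mu> (1 - z) = 1 / (z * (1 - z))"
    using stieltjes_identity[OF np.prob_space_axioms np.events_eq_borel AEn mu_prob mu_sets AEm rec] by blast
  show ?thesis
    using np.prob_space_axioms np.events_eq_borel nu st by (intro exI[of _ \<nu>]) auto
qed

end
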